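(* Let $\omega\in\{0,\infty\}$. Let $\Gamma_M$ ($M>0$) be a family of nonatomic routing games on a fixed graph with fixed OD pairs $\mathcal I$, path sets $\mathcal P^i$ and edge costs $(c_e)_{e\in\mathcal E}$, in which OD pair $i$ has demand $m^i=\lambda^i M$ for fixed constants $\lambda^i>0$ with $\sum_i\lambda^i=1$. Let $c$ be a benchmark for $(c_e)$ at $\omega$ and suppose the network is tight relative to $c$ at $\omega$, i.e. $0<\alpha<\infty$ where $\alpha=\max_{i\in\mathcal I}\min_{p\in\mathcal P^i}\max_{e\in p}\alpha_e$ and $\alpha_e=\lim_{x\to\omega}c_e(x)/c(x)$. Then $\lim_{M\to\omega}\mathrm{PoA}(\Gamma_M)=1$.
   Context: A nonatomic routing game consists of: a finite directed multigraph with edge set $\mathcal E$; a finite set $\mathcal I$ of OD pairs, each $i$ with demand $m^i\ge 0$ and a nonempty finite set $\mathcal P^i$ of paths from its origin to its destination, the $\mathcal P^i$ pairwise disjoint, $\mathcal P=\bigcup_i\mathcal P^i$; and continuous nondecreasing edge costs $c_e:[0,\infty)\to[0,\infty)$. Total inflow $M=\sum_i m^i>0$. Feasible flows: $f\in\mathbb R_+^{\mathcal P}$ with $\sum_{p\in\mathcal P^i}f_p=m^i$; loads $x_e=\sum_{p\ni e}f_p$; path costs $c_p(f)=\sum_{e\in p}c_e(x_e)$. A Wardrop equilibrium is a feasible $f^*$ with $c_p(f^* )\le c_{p'}(f^* )$ whenever $p,p'\in\mathcal P^i$ and $f^*_p>0$. Social cost $L(x)=\sum_e x_ec_e(x_e)$;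 $\mathrm{Opt}$ its minimum over feasible loads, $\mathrm{Eq}=L(x^* )$ at an equilibrium load, $\mathrm{PoA}=\mathrm{Eq}/\mathrm{Opt}$, with $\mathrm{Opt}>0$ assumed throughout (otherwise $\mathrm{PoA}:=1$). A function $g:(0,\infty)\to(0,\infty)$ is regularly varying at $\omega$ if $\lim_{t\to\omega}g(tx)/g(t)$ is finite and nonzero for all $x>0$; a regularly varying (at $\omega$) $c$ is a benchmark for $(c_e)$ at $\omega$ if $\alpha_e=\lim_{x\to\omega}c_e(x)/c(x)\in[0,\infty]$ exists for every edge $e$. *)

theory Defs
  imports "HOL-Analysis.Analysis"
begin

definition is_path :: "'e set \<Rightarrow> ('e \<Rightarrow> 'v) \<Rightarrow> ('e \<Rightarrow> 'v) \<Rightarrow> 'v \<Rightarrow> 'v \<Rightarrow> 'e list \<Rightarrow> bool" where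
  "is_path E src tgt u v es \<longleftrightarrow>
     es \<noteq> [] \<and> set es \<subseteq> E \<and> src (hd es) = u \<and> tgt (last es) = v \<and>
     (\<forall>k. Suc k < length es \<longrightarrow> tgt (es ! k) = src (es ! Suc k)) \<and>
     distinct (u # map tgt es)"

definition load :: "'i set \<Rightarrow> ('i \<Rightarrow> 'e list set) \<Rightarrow> ('e list \<Rightarrow> real) \<Rightarrow> 'e \<Rightarrow> real" where
  "load I P f e = (\<Sum>p\<in>{p \<in> (\<Union>i\<in>I. P i). e \<in> set p}. f p)"

definition path_cost :: "('e \<Rightarrow> real \<Rightarrow> real) \<Rightarrow> 'i set \<Rightarrow> ('i \<Rightarrow> 'e list set) \<Rightarrow> ('e list \<Rightarrow> real) \<Rightarrow> 'e list \<Rightarrow> real" where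
  "path_cost ce I P f p = (\<Sum>e\<in>set p. ce e (load I P f e))"

definition feasible :: "'i set \<Rightarrow> ('i \<Rightarrow> 'e list set) \<Rightarrow> ('i \<Rightarrow> real) \<Rightarrow> ('e list \<Rightarrow> real) \<Rightarrow> bool" where
  "feasible I P m f \<longleftrightarrow> (\<forall>p\<in>(\<Union>i\<in>I. P i). 0 \<le> f p) \<and> (\<forall>i\<in>I. (\<Sum>p\<in>P i. f p) = m i)"

definition wardrop_eq :: "('e \<Rightarrow> real \<Rightarrow> real) \<Rightarrow> 'i set \<Rightarrow> ('i \<Rightarrow> 'e list set) \<Rightarrow> ('i \<Rightarrow> real) \<Rightarrow> ('e list \<Rightarrow> real) \<Rightarrow> bool" where
  "wardrop_eq ce I P m f \<longleftrightarrow> feasible I P m f \<and>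
     (\<forall>i\<in>I. \<forall>p\<in>P i. \<forall>p'\<in>P i. 0 < f p \<longrightarrow> path_cost ce I P f p \<le> path_cost ce I P f p')"

definition social_cost :: "'e set \<Rightarrow> ('e \<Rightarrow> real \<Rightarrow> real) \<Rightarrow> 'i set \<Rightarrow> ('i \<Rightarrow> 'e list set) \<Rightarrow> ('e list \<Rightarrow> real) \<Rightarrow> real" where
  "social_cost E ce I P f = (\<Sum>e\<in>E. load I P f e * ce e (load I P f e))"

definition opt :: "'e set \<Rightarrow> ('e \<Rightarrow> real \<Rightarrow> real) \<Rightarrow> 'i set \<Rightarrow> ('i \<Rightarrow> 'e list set) \<Rightarrow> ('i \<Rightarrow> real) \<Rightarrow> real" where
  "opt E ce I P m = Inf {social_cost E ce I P f | f. feasible I P m f}"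

text \<open>Price of anarchy computed at an equilibrium flow f (all equilibria have the same
  social cost); PoA := 1 if Opt = 0.\<close>
definition poa :: "'e set \<Rightarrow> ('e \<Rightarrow> real \<Rightarrow> real) \<Rightarrow> 'i set \<Rightarrow> ('i \<Rightarrow> 'e list set) \<Rightarrow> ('i \<Rightarrow> real) \<Rightarrow> ('e list \<Rightarrow> real) \<Rightarrow> real" where
  "poa E ce I P m f = (if opt E ce I P m = 0 then 1 else social_cost E ce I P f / opt E ce I P m)"

text \<open>Regular variation at the point encoded by filter F (at_right 0 or at_top).\<close>
definition regularly_varying :: "real filter \<Rightarrow> (real \<Rightarrow> real) \<Rightarrow> bool" where
  "regularly_varying F g \<longleftrightarrow> (\<forall>t>0. 0 < g t) \<and>
     (\<forall>x>0. \<exists>L. L \<noteq> 0 \<and> ((\<lambda>t. g (t * x) / g t) \<longlongrightarrow> L) F)"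

definition tight_alpha :: "'i set \<Rightarrow> ('i \<Rightarrow> 'e list set) \<Rightarrow> ('e \<Rightarrow> ereal) \<Rightarrow> ereal" where
  "tight_alpha I P \<alpha> = Max ((\<lambda>i. Min ((\<lambda>p. Max (\<alpha> ` set p)) ` P i)) ` I)"

end

theory Submission
  imports Defs
begin


lemma young_rho:
  fixes s t \<rho> :: real assumes "s>0" "t>0" "\<rho>\<ge>0"
  shows "t * s powr \<rho> \<le> (1/(\<rho>+1)) * t powr (\<rho>+1) + (\<rho>/(\<rho>+1)) * s powr (\<rho>+1)"
proof -
  have "(t powr (\<rho>+1)) powr (1/(\<rho>+1)) * (s powr (\<rho>+1)) powr (\<rho>/(\<rho>+1))
        \<le> (1/(\<rho>+1)) * t powr (\<rho>+1) + (\<rho>/(\<rho>+1)) * s powr (\<rho>+1)"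
    using assms by (intro Youngs_inequality_0) (auto simp: field_simps)
  moreover have "(t powr (\<rho>+1)) powr (1/(\<rho>+1)) = t"
    using assms by (simp add: powr_powr)
  moreover have "(s powr (\<rho>+1)) powr (\<rho>/(\<rho>+1)) = s powr \<rho>"
    using assms by (simp add: powr_powr)
  ultimately show ?thesis by simp
qed

lemma smooth_region:
  fixes h :: "real \<Rightarrow> real"
  assumes M: "M > 0" and C: "C > 0" and mono: "mono_on {0..} h"
    and nn: "\<forall>x\<ge>0. 0 \<le> h x" and a: "a \<ge> 0" and rho: "\<rho> \<ge> 0"
    and e0: "0 < \<eta>0" "\<eta>0 \<le> 1" and d: "\<delta> \<ge> 0"
    and G: "\<forall>z. \<eta>0*M \<le> z \<and> z \<le> M \<longrightarrow> \<bar>h z - a*(z/M) powr \<rho> * C\<bar> \<le> \<delta>*C"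
    and HM: "h M \<le> (a+1)*C"
    and xy: "0 \<le> x" "x \<le> M" "0 \<le> y" "y \<le> M"
  shows "y * h x \<le> (1/(\<rho>+1))*(y*h y) + (\<rho>/(\<rho>+1))*(x*h x) + (\<eta>0*(a+1) + 3*\<delta>)*M*C"
proof -
  define lw where "lw = 1/(\<rho>+1)"
  define mw where "mw = \<rho>/(\<rho>+1)"
  have lw: "0 < lw" "lw \<le> 1" and mw: "0 \<le> mw" "mw \<le> 1" and lm: "lw + mw = 1"
    using rho by (auto simp: lw_def mw_def field_simps)
  have hmono: "h u \<le> h v" if "0 \<le> u" "u \<le> v" for u v
    using mono that by (auto simp: mono_on_def)
  have hM: "h u \<le> (a+1)*C" if "0 \<le> u" "u \<le> M" for u
    using hmono[OF that] HM by linarith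
  have core: "v * h u \<le> lw*(v * h v) + mw*(u*h u) + 3*\<delta>*M*C"
    if u: "\<eta>0*M \<le> u" "u \<le> M" and v: "\<eta>0*M \<le> v" "v \<le> M" for u v
  proof -
    define s where "s = u/M"
    define t where "t = v/M"
    have pos: "0 < \<eta>0*M" using M e0 by simp
    have sp: "s > 0" "s \<le> 1" and tp: "t > 0" "t \<le> 1"
      using u v M pos by (auto simp: s_def t_def field_simps)
    have u_eq: "u = s*M" and v_eq: "v = t*M" using M by (auto simp: s_def t_def)
    have Gu: "\<bar>h u - a * s powr \<rho> * C\<bar> \<le> \<delta>*C" using G u by (simp add: s_def)
    have Gv: "\<bar>h v - a * t powr \<rho> * C\<bar> \<le> \<delta>*C" using G v by (simp add: t_def)
    have Y: "t * s powr \<rho> \<le> lw * t powr (\<rho>+1) + mw * s powr (\<rho>+1)"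
      using young_rho[OF sp(1) tp(1) rho] by (simp add: lw_def mw_def)
    have tpow: "t powr (\<rho>+1) = t * t powr \<rho>" using tp by (simp add: powr_add)
    have spow: "s powr (\<rho>+1) = s * s powr \<rho>" using sp by (simp add: powr_add)
    have 1: "v * h u \<le> t*M*(a * s powr \<rho> * C + \<delta>*C)"
      using Gu tp M by (simp add: v_eq mult_left_mono)
    have 2: "lw*(v * h v) \<ge> lw*(t*M*(a * t powr \<rho> * C - \<delta>*C))"
      using Gv tp M lw by (intro mult_left_mono) (auto simp: v_eq mult_left_mono)
    have 3: "mw*(u*h u) \<ge> mw*(s*M*(a * s powr \<rho> * C - \<delta>*C))"
      using Gu sp M mw by (intro mult_left_mono) (auto simp: u_eq mult_left_mono)
    have "t*M*(a * s powr \<rho> * C + \<delta>*C) = M*C*(a*(t* s powr \<rho>)) + t*\<delta>*M*C"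
      by (simp add: algebra_simps)
    also have "\<dots> \<le> M*C*(a*(lw * t powr (\<rho>+1) + mw * s powr (\<rho>+1))) + \<delta>*M*C"
    proof -
      have "t*(\<delta>*M*C) \<le> 1*(\<delta>*M*C)" using tp d M C by (intro mult_right_mono) auto
      moreover have "M*C*(a*(t* s powr \<rho>)) \<le> M*C*(a*(lw * t powr (\<rho>+1) + mw * s powr (\<rho>+1)))"
        using Y a M C by (intro mult_left_mono) auto
      ultimately show ?thesis by (simp add: algebra_simps)
    qed
    also have "\<dots> = lw*(t*M*(a * t powr \<rho> * C - \<delta>*C)) + mw*(s*M*(a * s powr \<rho> * C - \<delta>*C))
        + (lw * t + mw * s)*\<delta>*M*C + \<delta>*M*C"
      unfolding tpow spow by (simp add: algebra_simps)
    also have "\<dots> \<le> lw*(t*M*(a * t powr \<rho> * C - \<delta>*C)) + mw*(s*M*(a * s powr \<rho> * C - \<delta>*C))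
        + 1*\<delta>*M*C + \<delta>*M*C"
    proof -
      have "(lw * t + mw * s) \<le> 1"
        using lw mw tp sp lm by (smt (verit) mult_right_le_one_le)
      hence "(lw * t + mw * s)*(\<delta>*M*C) \<le> 1*(\<delta>*M*C)" using d M C
        by (intro mult_right_mono) auto
      thus ?thesis by (simp add: algebra_simps)
    qed
    moreover have "0 \<le> \<delta>*M*C" using d M C by simp
    ultimately show ?thesis using 1 2 3 by (simp only: mult.assoc)
  qed
  have small: "0 \<le> \<eta>0*(a+1)*M*C" using e0 a M C by auto
  show ?thesis
  proof (cases "y \<le> \<eta>0*M")
    case True
    have "y * h x \<le> (\<eta>0*M)*((a+1)*C)"
      using True hM[OF xy(1,2)] xy nn a C by (intro mult_mono) auto
    moreover have "0 \<le> (1/(\<rho>+1))*(y*h y) + (\<rho>/(\<rho>+1))*(x*h x)"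
      using nn xy rho by auto
    moreover have "0 \<le> C * (M * (\<delta> * 3))" using d M C by simp
    ultimately show ?thesis by (simp add: algebra_simps)
  next
    case yb: False
    show ?thesis
    proof (cases "x \<le> \<eta>0*M")
      case True
      have "y * h x \<le> y * h (\<eta>0*M)"
        using True xy hmono by (intro mult_left_mono) auto
      also have "\<dots> \<le> lw*(y*h y) + mw*((\<eta>0*M)*h (\<eta>0*M)) + 3*\<delta>*M*C"
        using core[of "\<eta>0*M" y] yb xy e0 M by auto
      also have "mw*((\<eta>0*M)*h (\<eta>0*M)) \<le> 1*((\<eta>0*M)*((a+1)*C))"
        using mw e0 M hM[of "\<eta>0*M"] nn by (intro mult_mono) (auto simp: mult_le_one)
      finally have "y * h x \<le> lw*(y*h y) + \<eta>0*(a+1)*M*C + 3*\<delta>*M*C" by (simp add: algebra_simps)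
      moreover have "0 \<le> mw*(x*h x)" using mw nn xy by auto
      ultimately show ?thesis by (simp add: lw_def mw_def algebra_simps)
    next
      case False
      have "y * h x \<le> lw*(y*h y) + mw*(x*h x) + 3*\<delta>*M*C"
        using core[of x y] False yb xy by auto
      then show ?thesis using small by (simp add: lw_def mw_def algebra_simps)
    qed
  qed
qed




lemma cont_region:
  fixes h :: "real \<Rightarrow> real"
  assumes M: "M > 0" and C: "C > 0" and mono: "mono_on {0..} h"
    and nn: "\<forall>x\<ge>0. 0 \<le> h x" and a: "a \<ge> 0" and rho: "\<rho> \<ge> 0"
    and e0: "0 < \<eta>0" "\<eta>0 \<le> 1" and d: "\<delta> \<ge> 0"
    and G: "\<forall>z. \<eta>0*M \<le> z \<and> z \<le> M \<longrightarrow> \<bar>h z - a*(z/M) powr \<rho> * C\<bar> \<le> \<delta>*C"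
    and HM: "h M \<le> (a+1)*C" and th: "\<theta> \<ge> 0"
    and xy: "0 \<le> x" "x \<le> M" "0 \<le> x'" "x' \<le> M" "x' \<le> x + \<theta>*M"
  shows "x' * h x' \<le> x * h x + (\<theta>*(a+1) + \<eta>0*(a+1) + a*((1+\<theta>/\<eta>0) powr \<rho> - 1) + 2*\<delta>)*M*C"
proof -
  have hmono: "h u \<le> h v" if "0 \<le> u" "u \<le> v" for u v
    using mono that by (auto simp: mono_on_def)
  have hM: "h u \<le> (a+1)*C" if "0 \<le> u" "u \<le> M" for u
    using hmono[OF that] HM by linarith
  define W where "W = (1+\<theta>/\<eta>0) powr \<rho> - 1"
  have W: "W \<ge> 0" unfolding W_def using th e0 rho
  proof -
    have "1 \<le> 1+\<theta>/\<eta>0" using th e0 by simp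
    hence "1 \<le> (1+\<theta>/\<eta>0) powr \<rho>" using rho by (rule ge_one_powr_ge_zero)
    thus "0 \<le> (1+\<theta>/\<eta>0) powr \<rho> - 1" by simp
  qed
  have t1: "0 \<le> \<theta>*(a+1)*M*C" "0 \<le> \<eta>0*(a+1)*M*C" "0 \<le> a*W*M*C" "0 \<le> \<delta>*M*C"
    using th a M C e0 W d by auto
  have hx'1: "h x' \<le> (a+1)*C" using hM xy by simp
  have hx'0: "0 \<le> h x'" and hx0: "0 \<le> h x" using nn xy by auto
  have goal: "x' * h x' \<le> x * h x + \<theta>*(a+1)*M*C + \<eta>0*(a+1)*M*C + a*W*M*C + 2*(\<delta>*M*C)"
  proof (cases "x' \<le> x")
    case True
    have "x' * h x' \<le> x * h x"
      using True xy hx'0 hmono[of x' x] by (intro mult_mono) auto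
    then show ?thesis using t1 by linarith
  next
    case False
    have A: "(x'-x) * h x' \<le> (\<theta>*M) * ((a+1)*C)"
    proof (rule mult_mono)
      show "x' - x \<le> \<theta> * M" using xy by linarith
    qed (use False hx'1 hx'0 th M in auto)
    have B: "x * (h x' - h x) \<le> \<eta>0*(a+1)*M*C + a*W*M*C + 2*(\<delta>*M*C)"
    proof (cases "x \<le> \<eta>0*M")
      case True
      have "x * (h x' - h x) \<le> (\<eta>0*M) * ((a+1)*C)"
      proof (rule mult_mono)
        show "h x' - h x \<le> (a+1)*C" using hx'1 hx0 by linarith
      qed (use True xy hx0 hx'0 hmono[of x x'] False in auto)
      then show ?thesis using t1 by (simp add: algebra_simps)
    next
      case xb: False
      define s where "s = x/M"
      define s' where "s' = x'/M"
      have pos: "0 < \<eta>0*M" using M e0 by simp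
      have sp1: "\<eta>0 \<le> s" using xb M by (simp add: s_def pos_le_divide_eq)
      have sp: "\<eta>0 \<le> s" "s \<le> 1" "s > 0" using sp1 xy M e0 by (auto simp: s_def)
      have "x'/M \<le> (x + \<theta>*M)/M" using xy M by (intro divide_right_mono) auto
      also have "\<dots> = x/M + \<theta>" using M by (simp add: add_divide_distrib)
      finally have s'b: "s' \<le> s + \<theta>" by (simp add: s_def s'_def)
      have ss': "s \<le> s'" unfolding s_def s'_def using False M by (intro divide_right_mono) auto
      have "\<bar>h x - a*(x/M) powr \<rho> * C\<bar> \<le> \<delta>*C" using G xb xy by auto
      hence Gx: "h x \<ge> a * s powr \<rho> * C - \<delta>*C" unfolding s_def by linarith
      have "\<bar>h x' - a*(x'/M) powr \<rho> * C\<bar> \<le> \<delta>*C" using G xb xy False by auto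
      hence Gx': "h x' \<le> a * s' powr \<rho> * C + \<delta>*C" unfolding s'_def by linarith
      have "s' \<le> s * (1+\<theta>/\<eta>0)"
      proof -
        have "\<theta> = \<eta>0*(\<theta>/\<eta>0)" using e0 by simp
        also have "\<dots> \<le> s*(\<theta>/\<eta>0)" using sp th e0 by (intro mult_right_mono) auto
        finally have "\<theta> \<le> s*(\<theta>/\<eta>0)" .
        then show ?thesis using s'b by (simp add: algebra_simps)
      qed
      note sle = this
      have "s' powr \<rho> \<le> (s * (1+\<theta>/\<eta>0)) powr \<rho>"
      proof (rule powr_mono2)
        show "0 \<le> s'" using ss' sp by linarith
      qed (use rho sle in auto)
      also have "\<dots> = s powr \<rho> * (W+1)" proof -
        have "(s * (1+\<theta>/\<eta>0)) powr \<rho> = s powr \<rho> * (1+\<theta>/\<eta>0) powr \<rho>"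
          using sp th e0 by (simp add: powr_mult)
        thus ?thesis by (simp add: W_def)
      qed
      finally have "s' powr \<rho> - s powr \<rho> \<le> s powr \<rho> * W" by (simp add: algebra_simps)
      also have "\<dots> \<le> 1 * W" using sp rho W by (intro mult_right_mono) (auto intro: powr_le1)
      finally have sw: "s' powr \<rho> - s powr \<rho> \<le> W" by simp
      have "h x' - h x \<le> C * (a * (s' powr \<rho> - s powr \<rho>)) + 2*(\<delta>*C)"
        using Gx Gx' by (simp add: algebra_simps)
      also have "\<dots> \<le> C * (a * W) + 2*(\<delta>*C)"
        using sw a C d by (intro add_mono mult_left_mono) auto
      finally have hd: "h x' - h x \<le> C * (a * W) + 2*(\<delta>*C)" .
      have "x * (h x' - h x) \<le> M * (C * (a * W) + 2*(\<delta>*C))"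
      proof (rule mult_mono)
        show "0 \<le> h x' - h x" using hmono[of x x'] xy False by auto
      qed (use hd xy M in auto)
      then show ?thesis using t1 by (simp add: algebra_simps)
    qed
    have "x' * h x' = (x'-x) * h x' + x * (h x' - h x) + x * h x" by (simp add: algebra_simps)
    then show ?thesis using A B by (simp add: algebra_simps)
  qed
  have eqn: "(\<theta>*(a+1) + \<eta>0*(a+1) + a*W + 2*\<delta>)*M*C
     = \<theta>*(a+1)*M*C + \<eta>0*(a+1)*M*C + a*W*M*C + 2*(\<delta>*M*C)"
    by (simp add: distrib_right)
  show ?thesis using goal unfolding W_def[symmetric] eqn by (simp only: add.assoc)
qed




lemma one_minus_2powr: fixes y :: real assumes "y \<ge> 0" shows "1 - 2 powr (-y) \<le> y"
proof -
  have "2 powr (-y) = exp (-y * ln 2)" by (simp add: powr_def)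
  moreover have "1 + (-y * ln 2) \<le> exp (-y * ln 2)" by (rule exp_ge_add_one_self)
  moreover have "y * ln 2 \<le> y * 1" using assms ln_2_less_1 by (intro mult_left_mono) auto
  ultimately show ?thesis by linarith
qed

lemma grid_unif:
  fixes h c :: "real \<Rightarrow> real" and F :: "real filter"
  assumes evpos: "eventually (\<lambda>M. 0 < M) F"
    and mono: "mono_on {0..} h" and rho: "\<rho> \<ge> 0" and a: "a \<ge> 0"
    and lim: "\<And>n k. n > 0 \<Longrightarrow>
       ((\<lambda>M. h (M * 2 powr (-(real k/real n))) / c M) \<longlongrightarrow> a * 2 powr (-(real k/real n)*\<rho>)) F"
    and d: "\<delta> > 0" and e0: "0 < \<eta>0" "\<eta>0 \<le> 1"
    and cpos: "\<forall>t>0. c t > 0"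
  shows "eventually (\<lambda>M. \<forall>z. \<eta>0*M \<le> z \<and> z \<le> M \<longrightarrow> \<bar>h z - a*(z/M) powr \<rho> * c M\<bar> \<le> \<delta> * c M) F"
proof -
  define n :: nat where "n = nat \<lceil>2*a*\<rho>/\<delta>\<rceil> + 1"
  have n0: "n > 0" by (simp add: n_def)
  have "2*a*\<rho>/\<delta> \<le> real n" unfolding n_def by linarith
  hence "2*a*\<rho> \<le> \<delta> * real n" using d by (simp add: field_simps)
  hence an: "a*(\<rho>/real n) \<le> \<delta>/2" using n0 by (simp add: field_simps)
  define q where "q = 2 powr (-(\<rho>/real n))"
  have "q \<le> 2 powr 0" unfolding q_def using rho n0 by (intro powr_mono) auto
  hence q: "0 < q" "q \<le> 1" "1 - q \<le> \<rho>/real n"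
    using rho n0 one_minus_2powr[of "\<rho>/real n"] by (auto simp: q_def)
  define g where "g = (\<lambda>k::nat. 2 powr (-(real k/real n)))"
  define N :: nat where "N = nat \<lceil>real n * log 2 (1/\<eta>0)\<rceil>"
  have lim2: "\<forall>k\<in>{..Suc N}. eventually (\<lambda>M. \<bar>h (M * g k) / c M - a * 2 powr (-(real k/real n)*\<rho>)\<bar> < \<delta>/2) F"
  proof
    fix k assume "k \<in> {..Suc N}"
    from tendstoD[OF lim[OF n0, of k], of "\<delta>/2"] d
    show "eventually (\<lambda>M. \<bar>h (M * g k) / c M - a * 2 powr (-(real k/real n)*\<rho>)\<bar> < \<delta>/2) F"
      by (simp add: g_def dist_real_def)
  qed
  have ev: "eventually (\<lambda>M. 0 < M \<and> (\<forall>k\<in>{..Suc N}. \<bar>h (M * g k) / c M - a * 2 powr (-(real k/real n)*\<rho>)\<bar> < \<delta>/2)) F"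
    using evpos eventually_ball_finite[OF _ lim2] by (auto elim: eventually_elim2)
  show ?thesis
  proof (rule eventually_mono[OF ev], safe)
    fix M z assume M: "0 < M"
      and K: "\<forall>k\<in>{..Suc N}. \<bar>h (M * g k) / c M - a * 2 powr (-(real k/real n)*\<rho>)\<bar> < \<delta>/2"
      and z: "\<eta>0*M \<le> z" "z \<le> M"
    have cM: "c M > 0" using cpos M by auto
    have zp: "z > 0" using z M e0 by (smt (verit) mult_pos_pos)
    define \<sigma> where "\<sigma> = log 2 (M/z)"
    have \<sigma>0: "\<sigma> \<ge> 0" using z zp by (simp add: \<sigma>_def)
    have "M/z \<le> 1/\<eta>0" using z zp e0 M by (simp add: field_simps)
    hence \<sigma>1: "\<sigma> \<le> log 2 (1/\<eta>0)" using zp M e0 unfolding \<sigma>_def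
      by (subst log_le_cancel_iff) auto
    have zM: "z/M = 2 powr (-\<sigma>)"
      using zp M by (simp add: \<sigma>_def powr_minus)
    define k where "k = nat \<lfloor>real n * \<sigma>\<rfloor>"
    have k1: "real k \<le> real n * \<sigma>" using \<sigma>0 n0 by (simp add: k_def)
    have k2: "real n * \<sigma> < real k + 1" using \<sigma>0 n0 by (simp add: k_def)
    have kN: "k \<le> N"
    proof -
      have "real n * \<sigma> \<le> real n * log 2 (1/\<eta>0)" using \<sigma>1 by (simp add: mult_left_mono)
      thus ?thesis unfolding k_def N_def by (intro nat_mono floor_le_ceiling [THEN order_trans]) 
          (meson ceiling_mono floor_le_ceiling order_trans)
    qed
    have s1: "real k / real n \<le> \<sigma>" using k1 n0 by (simp add: field_simps)
    have s2: "\<sigma> \<le> real (Suc k) / real n" using k2 n0 by (simp add: field_simps)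
    have gk: "z/M \<le> g k" unfolding zM g_def using s1 by (intro powr_mono) auto
    have gk1: "g (Suc k) \<le> z/M" unfolding zM g_def using s2 by (intro powr_mono) auto
    have gpos: "g j > 0" for j by (simp add: g_def)
    have hz1: "h z \<le> h (M * g k)"
      using mono gk M zp by (auto simp: mono_on_def field_simps intro!: mono_onD[OF mono])
    have hz2: "h (M * g (Suc k)) \<le> h z"
      using mono gk1 M gpos[of "Suc k"] zp by (auto simp: field_simps intro!: mono_onD[OF mono])
    have Kk: "\<bar>h (M * g k) / c M - a * 2 powr (-(real k/real n)*\<rho>)\<bar> < \<delta>/2" using K kN by auto
    have Kk1: "\<bar>h (M * g (Suc k)) / c M - a * 2 powr (-(real (Suc k)/real n)*\<rho>)\<bar> < \<delta>/2" 
      using K kN by (metis atMost_iff Suc_le_mono)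
    define P where "P = 2 powr (-(real k/real n)*\<rho>)"
    have P1: "2 powr (-(real (Suc k)/real n)*\<rho>) = P * q"
    proof -
      have "-(real (Suc k)/real n)*\<rho> = (-(real k/real n)*\<rho>) + (-(\<rho>/real n))"
        by (simp add: field_simps add_divide_distrib)
      thus ?thesis unfolding P_def q_def by (simp only: powr_add[symmetric])
    qed
    have Pz: "(z/M) powr \<rho> = 2 powr (-\<sigma>*\<rho>)" unfolding zM by (simp add: powr_powr)
    have Pz1: "2 powr (-\<sigma>*\<rho>) \<le> P" unfolding P_def using mult_right_mono[OF s1 rho] by (intro powr_mono) auto
    have Pz2: "P * q \<le> 2 powr (-\<sigma>*\<rho>)" unfolding P1[symmetric] using mult_right_mono[OF s2 rho]
      by (intro powr_mono) auto
    have "0 \<le> real k/real n * \<rho>" using rho by simp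
    hence "P \<le> 2 powr 0" unfolding P_def by (intro powr_mono) auto
    hence P01: "0 \<le> P" "P \<le> 1" unfolding P_def by auto
    have Pdiff: "P - P*q \<le> \<rho>/real n"
    proof -
      have "P - P*q = P*(1-q)" by (simp add: algebra_simps)
      also have "\<dots> \<le> 1*(1-q)" using P01 q by (intro mult_right_mono) auto
      finally show ?thesis using q by simp
    qed
    have up: "h z / c M \<le> a * P + \<delta>/2"
      using hz1 Kk cM unfolding P_def by (smt (verit) divide_right_mono)
    have lo: "a * (P*q) - \<delta>/2 \<le> h z / c M"
      using hz2 Kk1 cM P1 by (smt (verit) divide_right_mono)
    have "P \<le> (z/M) powr \<rho> + \<rho>/real n" using Pz Pz2 Pdiff by linarith
    hence "a * P \<le> a * ((z/M) powr \<rho> + \<rho>/real n)" using a by (rule mult_left_mono)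
    hence "a * P \<le> a * (z/M) powr \<rho> + a*(\<rho>/real n)" by (simp add: distrib_left)
    moreover have "(z/M) powr \<rho> - \<rho>/real n \<le> P*q" using Pz Pz1 Pdiff by linarith
    hence "a * ((z/M) powr \<rho> - \<rho>/real n) \<le> a * (P*q)" using a by (rule mult_left_mono)
    hence "a * (P*q) \<ge> a * (z/M) powr \<rho> - a*(\<rho>/real n)" by (simp add: right_diff_distrib)
    ultimately have "\<bar>h z / c M - a*(z/M) powr \<rho>\<bar> \<le> \<delta>"
      using up lo an by linarith
    hence "\<bar>h z / c M - a*(z/M) powr \<rho>\<bar> * c M \<le> \<delta> * c M" using cM by (simp add: mult_right_mono)
    moreover have "\<bar>h z / c M - a*(z/M) powr \<rho>\<bar> * c M = \<bar>h z - a*(z/M) powr \<rho> * c M\<bar>"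
    proof -
      have "\<bar>h z / c M - a*(z/M) powr \<rho>\<bar> * c M = \<bar>(h z / c M - a*(z/M) powr \<rho>) * c M\<bar>"
        using cM by (simp add: abs_mult)
      also have "(h z / c M - a*(z/M) powr \<rho>) * c M = h z - a*(z/M) powr \<rho> * c M"
        using cM by (simp add: left_diff_distrib)
      finally show ?thesis .
    qed
    ultimately show "\<bar>h z - a*(z/M) powr \<rho> * c M\<bar> \<le> \<delta> * c M" by simp
  qed
qed




locale rv =
  fixes c :: "real \<Rightarrow> real" and F :: "real filter"
  assumes evpos: "eventually (\<lambda>M. 0 < M) F"
    and scale: "\<And>u. u > 0 \<Longrightarrow> filterlim (\<lambda>M. M*u) F F"
    and nbot: "F \<noteq> bot"
    and cpos: "\<forall>t>0. c t > 0"
    and regv: "\<forall>x>0. \<exists>L. L \<noteq> 0 \<and> ((\<lambda>t. c (t*x) / c t) \<longlongrightarrow> L) F"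
begin

definition R :: "real \<Rightarrow> real" where
  "R u = (SOME L. L \<noteq> 0 \<and> ((\<lambda>t. c (t*u) / c t) \<longlongrightarrow> L) F)"

lemma R_lim: assumes "u > 0" shows "((\<lambda>t. c (t*u) / c t) \<longlongrightarrow> R u) F"
  and "R u \<noteq> 0"
proof -
  from regv assms obtain L where "L \<noteq> 0 \<and> ((\<lambda>t. c (t*u) / c t) \<longlongrightarrow> L) F" by blast
  hence "R u \<noteq> 0 \<and> ((\<lambda>t. c (t*u) / c t) \<longlongrightarrow> R u) F"
    unfolding R_def by (rule someI)
  thus "((\<lambda>t. c (t*u) / c t) \<longlongrightarrow> R u) F" "R u \<noteq> 0" by auto
qed

lemma R_pos: assumes "u > 0" shows "R u > 0"
proof -
  have "eventually (\<lambda>t. 0 \<le> c (t*u) / c t) F"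
  proof (rule eventually_mono[OF evpos])
    fix t :: real assume t: "0 < t"
    have "c (t*u) > 0" "c t > 0" using cpos assms t by simp_all
    thus "0 \<le> c (t*u) / c t" by simp
  qed
  hence "R u \<ge> 0" using tendsto_lowerbound[OF R_lim(1)[OF assms] _ nbot] by auto
  thus ?thesis using R_lim(2)[OF assms] by auto
qed

lemma R_mult: assumes "u > 0" "v > 0" shows "R (u * v) = R u * R v"
proof -
  have 1: "((\<lambda>t. c (t*u * v) / c (t*u)) \<longlongrightarrow> R v) F"
    using filterlim_compose[OF R_lim(1)[OF assms(2)] scale[OF assms(1)]] by simp
  have "((\<lambda>t. c (t*u * v) / c (t*u) * (c (t*u) / c t)) \<longlongrightarrow> R v * R u) F"
    by (intro tendsto_mult 1 R_lim(1) assms)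
  moreover have "eventually (\<lambda>t. c (t*u * v) / c (t*u) * (c (t*u) / c t) = c (t*(u * v)) / c t) F"
  proof (rule eventually_mono[OF evpos])
    fix t :: real assume t: "0 < t"
    have "c (t*u) > 0" using cpos assms t by simp
    thus "c (t*u * v) / c (t*u) * (c (t*u) / c t) = c (t*(u * v)) / c t" by (simp add: mult.assoc)
  qed
  ultimately have "((\<lambda>t. c (t*(u * v)) / c t) \<longlongrightarrow> R v * R u) F"
    by (rule Lim_transform_eventually)
  from tendsto_unique[OF nbot R_lim(1)[of "u * v"] this] assms show ?thesis by (simp add: mult.commute)
qed

lemma R_one: "R 1 = 1"
proof -
  have "eventually (\<lambda>t. 1 = c (t*1) / c t) F"
  proof (rule eventually_mono[OF evpos])
    fix t :: real assume t: "0 < t"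
    have "c t > 0" using cpos t by simp
    thus "1 = c (t*1) / c t" by simp
  qed
  hence "((\<lambda>t. c (t*1) / c t) \<longlongrightarrow> 1) F"
    by (rule Lim_transform_eventually[OF tendsto_const])
  from tendsto_unique[OF nbot R_lim(1)[of 1] this] show ?thesis by simp
qed

lemma R_pow: assumes "u > 0" shows "R (u^k) = R u ^ k"
  by (induction k) (use assms R_one R_mult in auto)

definition rho :: real where "rho = - log 2 (R (1/2))"

lemma R_grid: assumes n: "n > 0" shows "R (2 powr (-(real k/real n))) = 2 powr (-(real k/real n)*rho)"
proof -
  define r where "r = 2 powr (-(1/real n))"
  have rpos: "r > 0" by (simp add: r_def)
  have rk: "r ^ k = 2 powr (-(real k/real n))" for k
    unfolding r_def by (simp add: powr_realpow[symmetric] powr_powr)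
  have rn: "r ^ n = 1/2" using rk[of n] n by (simp add: powr_minus)
  have Rh: "R (1/2) = R r ^ n" using R_pow[OF rpos, of n] by (simp only: rn)
  have Rr: "R r = R (1/2) powr (1/real n)"
  proof -
    have "R (1/2) powr (1/real n) = (R r powr real n) powr (1/real n)"
      using Rh R_pos[OF rpos] by (simp add: powr_realpow)
    also have "\<dots> = R r" using n R_pos[OF rpos] by (simp add: powr_powr)
    finally show ?thesis by simp
  qed
  have h2: "R (1/2) = 2 powr (-rho)" unfolding rho_def using R_pos[of "1/2"] by simp
  have "R (2 powr (-(real k/real n))) = R r ^ k" using R_pow[OF rpos, of k] rk by simp
  also have "\<dots> = (R r) powr real k" using R_pos[OF rpos] by (simp add: powr_realpow)
  also have "\<dots> = 2 powr (-(real k/real n)*rho)"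
    unfolding Rr h2 by (simp add: powr_powr mult.commute)
  finally show ?thesis .
qed

lemma edge_lim:
  fixes h :: "real \<Rightarrow> real"
  assumes lim: "((\<lambda>x. h x / c x) \<longlongrightarrow> a) F" and u: "u > 0"
  shows "((\<lambda>M. h (M*u) / c M) \<longlongrightarrow> a * R u) F"
proof -
  have 1: "((\<lambda>M. h (M*u) / c (M*u)) \<longlongrightarrow> a) F"
    using filterlim_compose[OF lim scale[OF u]] by simp
  have "((\<lambda>M. h (M*u) / c (M*u) * (c (M*u) / c M)) \<longlongrightarrow> a * R u) F"
    by (intro tendsto_mult 1 R_lim(1) u)
  moreover have "eventually (\<lambda>M. h (M*u) / c (M*u) * (c (M*u) / c M) = h (M*u) / c M) F"
  proof (rule eventually_mono[OF evpos])
    fix M :: real assume M: "0 < M"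
    have "c (M*u) > 0" using cpos u M by simp
    thus "h (M*u) / c (M*u) * (c (M*u) / c M) = h (M*u) / c M" by simp
  qed
  ultimately show ?thesis by (rule Lim_transform_eventually)
qed

end




lemma load_alt:
  assumes "finite (\<Union>i\<in>I. P i)"
  shows "load I P g e = (\<Sum>p\<in>(\<Union>i\<in>I. P i). if e \<in> set p then g p else 0)"
  unfolding load_def by (rule sum.inter_filter[OF assms])

lemma load_nonneg:
  assumes "feasible I P m g" shows "0 \<le> load I P g e"
  using assms unfolding load_def feasible_def by (intro sum_nonneg) auto

lemma sum_PP:
  assumes "finite I" "\<forall>i\<in>I. finite (P i)" "disjoint_family_on P I"
  shows "(\<Sum>p\<in>(\<Union>i\<in>I. P i). h p) = (\<Sum>i\<in>I. \<Sum>p\<in>P i. h p)"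
  using assms by (intro sum.UNION_disjoint) (auto simp: disjoint_family_on_def)

lemma load_le:
  assumes "finite I" "\<forall>i\<in>I. finite (P i)" "disjoint_family_on P I" "feasible I P m g"
  shows "load I P g e \<le> (\<Sum>i\<in>I. m i)"
proof -
  have fin: "finite (\<Union>i\<in>I. P i)" using assms by auto
  have "load I P g e \<le> (\<Sum>p\<in>(\<Union>i\<in>I. P i). g p)"
    unfolding load_def using assms(4) fin by (intro sum_mono2) (auto simp: feasible_def)
  also have "\<dots> = (\<Sum>i\<in>I. \<Sum>p\<in>P i. g p)" by (rule sum_PP[OF assms(1-3)])
  also have "\<dots> = (\<Sum>i\<in>I. m i)" using assms(4) by (simp add: feasible_def)
  finally show ?thesis .
qed

lemma cross_sum:
  assumes "finite E" "finite (\<Union>i\<in>I. P i)" "\<forall>p\<in>(\<Union>i\<in>I. P i). set p \<subseteq> E"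
  shows "(\<Sum>e\<in>E. load I P g e * w e) = (\<Sum>p\<in>(\<Union>i\<in>I. P i). g p * (\<Sum>e\<in>set p. w e))"
proof -
  have "(\<Sum>e\<in>E. load I P g e * w e) = (\<Sum>e\<in>E. \<Sum>p\<in>(\<Union>i\<in>I. P i). if e \<in> set p then g p * w e else 0)"
    using assms by (simp add: load_alt sum_distrib_right) (auto intro!: sum.cong)
  also have "\<dots> = (\<Sum>p\<in>(\<Union>i\<in>I. P i). \<Sum>e\<in>E. if e \<in> set p then g p * w e else 0)"
    by (rule sum.swap)
  also have "\<dots> = (\<Sum>p\<in>(\<Union>i\<in>I. P i). g p * (\<Sum>e\<in>set p. w e))"
  proof (rule sum.cong[OF refl])
    fix p assume p: "p \<in> (\<Union>i\<in>I. P i)"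
    have "(\<Sum>e\<in>E. if e \<in> set p then g p * w e else 0) = (\<Sum>e\<in>{e\<in>E. e \<in> set p}. g p * w e)"
      using assms by (simp add: sum.inter_filter)
    also have "{e\<in>E. e \<in> set p} = set p" using assms p by auto
    finally show "(\<Sum>e\<in>E. if e \<in> set p then g p * w e else 0) = g p * (\<Sum>e\<in>set p. w e)"
      by (simp add: sum_distrib_left)
  qed
  finally show ?thesis .
qed

lemma social_paths:
  assumes "finite E" "finite (\<Union>i\<in>I. P i)" "\<forall>p\<in>(\<Union>i\<in>I. P i). set p \<subseteq> E"
  shows "social_cost E ce I P g = (\<Sum>p\<in>(\<Union>i\<in>I. P i). g p * path_cost ce I P g p)"
  unfolding social_cost_def path_cost_def by (rule cross_sum[OF assms])

lemma eq_per_od: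
  assumes W: "wardrop_eq ce I P m f" and i: "i \<in> I" and fin: "finite (P i)" "P i \<noteq> {}"
    and y: "feasible I P m y"
  shows "(\<Sum>p\<in>P i. f p * path_cost ce I P f p) = m i * Min (path_cost ce I P f ` P i)"
    and "(\<Sum>p\<in>P i. f p * path_cost ce I P f p) \<le> (\<Sum>p\<in>P i. y p * path_cost ce I P f p)"
    and "\<forall>p\<in>P i. m i * Min (path_cost ce I P f ` P i) \<le> m i * path_cost ce I P f p"
proof -
  let ?pc = "path_cost ce I P f"
  define \<pi> where "\<pi> = Min (?pc ` P i)"
  have pimin: "\<pi> \<le> ?pc p" if "p \<in> P i" for p using fin that by (simp add: \<pi>_def)
  have fnn: "0 \<le> f p" if "p \<in> P i" for p using W i that by (auto simp: wardrop_eq_def feasible_def)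
  have ynn: "0 \<le> y p" if "p \<in> P i" for p using y i that by (auto simp: feasible_def)
  have fs: "(\<Sum>p\<in>P i. f p) = m i" using W i by (simp add: wardrop_eq_def feasible_def)
  have ys: "(\<Sum>p\<in>P i. y p) = m i" using y i by (simp add: feasible_def)
  have "\<pi> \<in> ?pc ` P i" using fin unfolding \<pi>_def by (intro Min_in) auto
  then obtain p0 where p0: "p0 \<in> P i" "?pc p0 = \<pi>" by auto
  have feq: "f p * ?pc p = f p * \<pi>" if p: "p \<in> P i" for p
  proof (cases "f p > 0")
    case True
    then have "?pc p \<le> ?pc p0" using W i p p0 by (auto simp: wardrop_eq_def)
    then show ?thesis using pimin[OF p] p0 by simp
  next
    case False then have "f p = 0" using fnn[OF p] by simp
    then show ?thesis by simp
  qed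
  have 1: "(\<Sum>p\<in>P i. f p * ?pc p) = m i * \<pi>"
  proof -
    have "(\<Sum>p\<in>P i. f p * ?pc p) = (\<Sum>p\<in>P i. f p * \<pi>)" using feq by (rule sum.cong[OF refl])
    also have "\<dots> = m i * \<pi>" using fs by (simp add: sum_distrib_right[symmetric])
    finally show ?thesis .
  qed
  have "(\<Sum>p\<in>P i. y p * ?pc p) \<ge> (\<Sum>p\<in>P i. y p * \<pi>)"
    using pimin ynn by (intro sum_mono mult_left_mono) auto
  also have "(\<Sum>p\<in>P i. y p * \<pi>) = m i * \<pi>" using ys by (simp add: sum_distrib_right[symmetric])
  finally show "(\<Sum>p\<in>P i. f p * ?pc p) \<le> (\<Sum>p\<in>P i. y p * ?pc p)" using 1 by simp
  show "(\<Sum>p\<in>P i. f p * ?pc p) = m i * Min (?pc ` P i)" using 1 by (simp add: \<pi>_def)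
  have "m i \<ge> 0" using fs fnn by (metis sum_nonneg)
  then show "\<forall>p\<in>P i. m i * Min (?pc ` P i) \<le> m i * ?pc p"
    using pimin by (auto simp: \<pi>_def intro: mult_left_mono)
qed




locale game = rv c F for c :: "real \<Rightarrow> real" and F :: "real filter" +
  fixes E :: "'e set" and I :: "'i set" and P :: "'i \<Rightarrow> 'e list set"
    and ce :: "'e \<Rightarrow> real \<Rightarrow> real" and lam :: "'i \<Rightarrow> real"
    and \<alpha> :: "'e \<Rightarrow> ereal" and f :: "real \<Rightarrow> 'e list \<Rightarrow> real"
  assumes finE: "finite E" and finI: "finite I"
    and Pfin: "\<forall>i\<in>I. finite (P i) \<and> P i \<noteq> {}"
    and Pin: "\<forall>i\<in>I. \<forall>p\<in>P i. p \<noteq> [] \<and> set p \<subseteq> E"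
    and disj: "disjoint_family_on P I"
    and costs: "\<forall>e\<in>E. mono_on {0..} (ce e) \<and> (\<forall>x\<ge>0. 0 \<le> ce e x)"
    and lampos: "\<forall>i\<in>I. 0 < lam i" and lamsum: "(\<Sum>i\<in>I. lam i) = 1"
    and bench: "\<forall>e\<in>E. ((\<lambda>x. ereal (ce e x / c x)) \<longlongrightarrow> \<alpha> e) F"
    and tight: "0 < tight_alpha I P \<alpha>" "tight_alpha I P \<alpha> < \<infinity>"
    and eqm: "\<forall>M>0. wardrop_eq ce I P (\<lambda>i. lam i * M) (f M)"
begin

abbreviation "PP \<equiv> (\<Union>i\<in>I. P i)"

lemma PPfin: "finite PP" using finI Pfin by auto
lemma PPsub: "\<forall>p\<in>PP. set p \<subseteq> E" using Pin by auto
lemma Ine: "I \<noteq> {}" using lamsum by auto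
lemma msum: "(\<Sum>i\<in>I. lam i * M) = M" using lamsum by (simp add: sum_distrib_right[symmetric])

lemma ce_mono: "e \<in> E \<Longrightarrow> 0 \<le> x \<Longrightarrow> x \<le> y \<Longrightarrow> ce e x \<le> ce e y"
  using costs by (auto simp: mono_on_def)
lemma ce_nn: "e \<in> E \<Longrightarrow> 0 \<le> x \<Longrightarrow> 0 \<le> ce e x"
  using costs by auto

lemma cpos': "0 < t \<Longrightarrow> 0 < c t" using cpos by simp

lemma alpha_nonneg: assumes e: "e \<in> E" shows "0 \<le> \<alpha> e"
proof -
  have "eventually (\<lambda>x. 0 \<le> ereal (ce e x / c x)) F"
  proof (rule eventually_mono[OF evpos])
    fix x :: real assume "0 < x"
    then have "0 < c x" "0 \<le> ce e x" using cpos' ce_nn[OF e] by auto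
    then show "0 \<le> ereal (ce e x / c x)" by simp
  qed
  then show ?thesis using tendsto_lowerbound[OF bench[rule_format, OF e] _ nbot] by simp
qed

lemma alpha_cases: assumes "e \<in> E" shows "\<alpha> e = \<infinity> \<or> (\<exists>a. 0 \<le> a \<and> \<alpha> e = ereal a)"
  using alpha_nonneg[OF assms] by (cases "\<alpha> e") auto

lemma fin_lim: assumes "e \<in> E" "\<alpha> e = ereal a" shows "((\<lambda>x. ce e x / c x) \<longlongrightarrow> a) F"
  using bench assms by auto

lemma tight_struct:
  obtains ar where "tight_alpha I P \<alpha> = ereal ar" "ar > 0"
    "\<forall>i\<in>I. \<exists>p\<in>P i. \<forall>e\<in>set p. \<alpha> e \<le> ereal ar"
    "\<exists>i0\<in>I. \<forall>p\<in>P i0. \<exists>e\<in>set p. ereal ar \<le> \<alpha> e"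
proof -
  define B where "B = (\<lambda>p. Max (\<alpha> ` set p))"
  define A where "A = (\<lambda>i. Min (B ` P i))"
  have T: "tight_alpha I P \<alpha> = Max (A ` I)" by (simp add: tight_alpha_def A_def B_def)
  obtain ar where ar: "tight_alpha I P \<alpha> = ereal ar" using tight by (cases "tight_alpha I P \<alpha>") auto
  have arp: "ar > 0" using tight ar by simp
  have Bmax: "\<alpha> e \<le> B p" if "e \<in> set p" for p e using that by (simp add: B_def)
  have Bin: "B p \<in> \<alpha> ` set p" if "p \<noteq> []" for p using that unfolding B_def by (intro Max_in) auto
  have Amin: "A i \<le> B p" if "i \<in> I" "p \<in> P i" for i p using that Pfin by (auto simp: A_def)
  have Ain: "A i \<in> B ` P i" if "i \<in> I" for i using that Pfin unfolding A_def by (intro Min_in) auto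
  have Tmax: "A i \<le> tight_alpha I P \<alpha>" if "i \<in> I" for i using that finI by (simp add: T)
  have Tin: "tight_alpha I P \<alpha> \<in> A ` I" unfolding T using finI Ine by (intro Max_in) auto
  show ?thesis
  proof (rule that[OF ar arp])
    show "\<forall>i\<in>I. \<exists>p\<in>P i. \<forall>e\<in>set p. \<alpha> e \<le> ereal ar"
    proof
      fix i assume i: "i \<in> I"
      from Ain[OF i] obtain p where p: "p \<in> P i" "A i = B p" by auto
      have "\<forall>e\<in>set p. \<alpha> e \<le> ereal ar"
        using Bmax p Tmax[OF i] ar by (metis order_trans)
      with p show "\<exists>p\<in>P i. \<forall>e\<in>set p. \<alpha> e \<le> ereal ar" by blast
    qed
    from Tin obtain i0 where i0: "i0 \<in> I" "tight_alpha I P \<alpha> = A i0" by auto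
    have "\<forall>p\<in>P i0. \<exists>e\<in>set p. ereal ar \<le> \<alpha> e"
    proof
      fix p assume p: "p \<in> P i0"
      have "p \<noteq> []" using Pin i0 p by auto
      from Bin[OF this] obtain e where e: "e \<in> set p" "B p = \<alpha> e" by auto
      have "ereal ar \<le> \<alpha> e" using Amin[OF i0(1) p] i0 ar e by simp
      with e show "\<exists>e\<in>set p. ereal ar \<le> \<alpha> e" by blast
    qed
    with i0 show "\<exists>i0\<in>I. \<forall>p\<in>P i0. \<exists>e\<in>set p. ereal ar \<le> \<alpha> e" by blast
  qed
qed

lemma rho_nonneg: "0 \<le> rho"
proof -
  obtain ar where ar: "tight_alpha I P \<alpha> = ereal ar" "ar > 0"
    "\<forall>i\<in>I. \<exists>p\<in>P i. \<forall>e\<in>set p. \<alpha> e \<le> ereal ar"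
    "\<exists>i0\<in>I. \<forall>p\<in>P i0. \<exists>e\<in>set p. ereal ar \<le> \<alpha> e" by (rule tight_struct)
  from ar(4) obtain i0 where i0: "i0 \<in> I" "\<forall>p\<in>P i0. \<exists>e\<in>set p. ereal ar \<le> \<alpha> e" by blast
  from ar(3) i0(1) obtain p where p: "p \<in> P i0" "\<forall>e\<in>set p. \<alpha> e \<le> ereal ar" by blast
  from i0(2) p(1) obtain e where e: "e \<in> set p" "ereal ar \<le> \<alpha> e" by blast
  have eE: "e \<in> E" using Pin i0 p e by auto
  have ae: "\<alpha> e = ereal ar" using e p by (metis antisym)
  have l1: "((\<lambda>M. ce e (M*(1/2)) / c M) \<longlongrightarrow> ar * R (1/2)) F"
    by (rule edge_lim[OF fin_lim[OF eE ae]]) simp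
  have l2: "((\<lambda>M. ce e (M*1) / c M) \<longlongrightarrow> ar * R 1) F"
    by (rule edge_lim[OF fin_lim[OF eE ae]]) simp
  have "eventually (\<lambda>M. ce e (M*(1/2)) / c M \<le> ce e (M*1) / c M) F"
  proof (rule eventually_mono[OF evpos])
    fix M :: real assume M: "0 < M"
    have "ce e (M*(1/2)) \<le> ce e (M*1)" using M by (intro ce_mono[OF eE]) auto
    then show "ce e (M*(1/2)) / c M \<le> ce e (M*1) / c M" using cpos'[OF M] by (simp add: divide_right_mono)
  qed
  from tendsto_le[OF nbot l2 l1 this] have "ar * R (1/2) \<le> ar * 1" by (simp add: R_one)
  hence "R (1/2) \<le> 1" using ar(2) by simp
  hence "log 2 (R (1/2)) \<le> 0" using R_pos[of "1/2"] by simp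
  thus ?thesis by (simp add: rho_def)
qed

lemma ev_upper: assumes e: "e \<in> E" "\<alpha> e = ereal a"
  shows "eventually (\<lambda>M. ce e M \<le> (a + 1) * c M) F"
proof -
  have l: "((\<lambda>M. ce e (M*1) / c M) \<longlongrightarrow> a * R 1) F"
    by (rule edge_lim[OF fin_lim[OF e]]) simp
  have "eventually (\<lambda>M. ce e (M*1) / c M < a + 1) F"
    using order_tendstoD(2)[OF l] by (simp add: R_one)
  then show ?thesis
  proof (rule eventually_elim2[OF evpos])
    fix M :: real assume M: "0 < M" and "ce e (M*1) / c M < a + 1"
    then show "ce e M \<le> (a + 1) * c M" using cpos'[OF M] by (simp add: divide_less_eq)
  qed
qed

lemma ev_G: assumes e: "e \<in> E" "\<alpha> e = ereal a" and d: "\<delta> > 0" and e0: "0 < \<eta>0" "\<eta>0 \<le> 1"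
  shows "eventually (\<lambda>M. \<forall>z. \<eta>0*M \<le> z \<and> z \<le> M \<longrightarrow> \<bar>ce e z - a*(z/M) powr rho * c M\<bar> \<le> \<delta> * c M) F"
proof (rule grid_unif[OF evpos _ rho_nonneg _ _ d e0 cpos])
  show "mono_on {0..} (ce e)" using costs e by auto
  show "0 \<le> a" using alpha_nonneg[OF e(1)] e(2) by simp
  fix n k :: nat assume n: "n > 0"
  have "((\<lambda>M. ce e (M * 2 powr (-(real k/real n))) / c M) \<longlongrightarrow> a * R (2 powr (-(real k/real n)))) F"
    by (rule edge_lim[OF fin_lim[OF e]]) simp
  then show "((\<lambda>M. ce e (M * 2 powr (-(real k/real n))) / c M) \<longlongrightarrow> a * 2 powr (-(real k/real n)*rho)) F"
    using R_grid[OF n] by simp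
qed

lemma ev_big: assumes e: "e \<in> E" and b: "ereal b < \<alpha> e" "0 \<le> b" and th: "\<theta> > 0"
  shows "eventually (\<lambda>M. b * (R \<theta> / 2) * c M \<le> ce e (M*\<theta>)) F"
proof -
  have l1: "((\<lambda>M. ereal (ce e (M*\<theta>) / c (M*\<theta>))) \<longlongrightarrow> \<alpha> e) F"
    using filterlim_compose[OF bench[rule_format, OF e] scale[OF th]] by simp
  have ev1: "eventually (\<lambda>M. ereal b < ereal (ce e (M*\<theta>) / c (M*\<theta>))) F"
    using order_tendstoD(1)[OF l1 b(1)] .
  have Rp: "R \<theta> > 0" by (rule R_pos[OF th])
  have ev2: "eventually (\<lambda>M. R \<theta> / 2 < c (M*\<theta>) / c M) F"
    by (rule order_tendstoD(1)[OF R_lim(1)[OF th]]) (use Rp in simp)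
  show ?thesis
  proof (rule eventually_mono[OF eventually_conj[OF evpos eventually_conj[OF ev1 ev2]]])
    fix M :: real assume H: "0 < M \<and> ereal b < ereal (ce e (M*\<theta>) / c (M*\<theta>)) \<and> R \<theta> / 2 < c (M*\<theta>) / c M"
    have M: "0 < M" using H by simp
    have cM: "0 < c M" using cpos'[OF M] .
    have cMt: "0 < c (M*\<theta>)" using cpos' M th by simp
    have 1: "b * c (M*\<theta>) \<le> ce e (M*\<theta>)" using H cMt by (simp add: less_divide_eq)
    have 2: "R \<theta> / 2 * c M \<le> c (M*\<theta>)" using H cM by (simp add: less_divide_eq)
    have "b * (R \<theta> / 2) * c M = b * (R \<theta> / 2 * c M)" by simp
    also have "\<dots> \<le> b * c (M*\<theta>)" using 2 b(2) by (rule mult_left_mono)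
    finally show "b * (R \<theta> / 2) * c M \<le> ce e (M*\<theta>)" using 1 by linarith
  qed
qed

end




context game begin

definition "mm M = (\<lambda>i. lam i * M)"
definition "Lc g = social_cost E ce I P g"
definition "Opt M = opt E ce I P (mm M)"
definition "xl M e = load I P (f M) e"

lemma sumPP: "(\<Sum>p\<in>PP. h p) = (\<Sum>i\<in>I. \<Sum>p\<in>P i. h p)"
  by (rule sum_PP[OF finI _ disj]) (use Pfin in auto)

lemma feas_f: "0 < M \<Longrightarrow> feasible I P (mm M) (f M)"
  using eqm by (auto simp: wardrop_eq_def mm_def)

lemma load_leM: "feasible I P (mm M) g \<Longrightarrow> load I P g e \<le> M"
  using load_le[OF finI _ disj, of "mm M" g e] Pfin msum by (auto simp: mm_def)

lemma Lc_nn: assumes "feasible I P (mm M) g" shows "0 \<le> Lc g"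
  unfolding Lc_def social_cost_def
  using load_nonneg[OF assms] ce_nn by (intro sum_nonneg mult_nonneg_nonneg) auto

lemma term_le_Lc: assumes "feasible I P (mm M) g" "e \<in> E"
  shows "load I P g e * ce e (load I P g e) \<le> Lc g"
  unfolding Lc_def social_cost_def
  using load_nonneg[OF assms(1)] ce_nn assms(2) finE
  by (intro member_le_sum mult_nonneg_nonneg) auto

lemma opt_set:
  assumes M: "0 < M"
  shows "{social_cost E ce I P g | g. feasible I P (mm M) g} \<noteq> {}"
    and "bdd_below {social_cost E ce I P g | g. feasible I P (mm M) g}"
  using feas_f[OF M] Lc_nn unfolding Lc_def bdd_below_def by blast+

lemma Opt_le: "0 < M \<Longrightarrow> feasible I P (mm M) g \<Longrightarrow> Opt M \<le> Lc g"
  unfolding Opt_def opt_def Lc_def using opt_set by (intro cInf_lower) auto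

lemma Opt_ge: "0 < M \<Longrightarrow> (\<And>g. feasible I P (mm M) g \<Longrightarrow> b \<le> Lc g) \<Longrightarrow> b \<le> Opt M"
  unfolding Opt_def opt_def Lc_def using opt_set by (intro cInf_greatest) auto

lemma Opt_approx: assumes "0 < M" "0 < \<epsilon>"
  shows "\<exists>y. feasible I P (mm M) y \<and> Lc y < Opt M + \<epsilon>"
proof -
  have "Inf {social_cost E ce I P g | g. feasible I P (mm M) g} < Opt M + \<epsilon>"
    using assms by (simp add: Opt_def opt_def)
  from cInf_lessD[OF opt_set(1)[OF assms(1)] this] show ?thesis by (auto simp: Lc_def)
qed

lemma Eq_paths: assumes M: "0 < M"
  shows "Lc (f M) = (\<Sum>i\<in>I. \<Sum>p\<in>P i. f M p * path_cost ce I P (f M) p)"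
  unfolding Lc_def social_paths[OF finE PPfin PPsub] by (rule sumPP)

lemma VI: assumes M: "0 < M" and y: "feasible I P (mm M) y"
  shows "Lc (f M) \<le> (\<Sum>e\<in>E. load I P y e * ce e (xl M e))"
proof -
  have W: "wardrop_eq ce I P (mm M) (f M)" using eqm M by (simp add: mm_def)
  have "Lc (f M) \<le> (\<Sum>i\<in>I. \<Sum>p\<in>P i. y p * path_cost ce I P (f M) p)"
    unfolding Eq_paths[OF M]
  proof (rule sum_mono)
    fix i assume "i \<in> I"
    then show "(\<Sum>p\<in>P i. f M p * path_cost ce I P (f M) p) \<le> (\<Sum>p\<in>P i. y p * path_cost ce I P (f M) p)"
      using eq_per_od(2)[OF W _ _ _ y] Pfin by auto
  qed
  also have "\<dots> = (\<Sum>p\<in>PP. y p * path_cost ce I P (f M) p)"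
    by (rule sumPP[symmetric])
  also have "\<dots> = (\<Sum>e\<in>E. load I P y e * ce e (xl M e))"
    unfolding path_cost_def xl_def using cross_sum[OF finE PPfin PPsub] by simp
  finally show ?thesis .
qed

lemma Eq_le_choice: assumes M: "0 < M" and ps: "\<forall>i\<in>I. ps i \<in> P i"
  shows "Lc (f M) \<le> (\<Sum>i\<in>I. lam i * M * path_cost ce I P (f M) (ps i))"
proof -
  have W: "wardrop_eq ce I P (mm M) (f M)" using eqm M by (simp add: mm_def)
  have "Lc (f M) = (\<Sum>i\<in>I. mm M i * Min (path_cost ce I P (f M) ` P i))"
    unfolding Eq_paths[OF M] using eq_per_od(1)[OF W _ _ _ feas_f[OF M]] Pfin by (intro sum.cong) auto
  also have "\<dots> \<le> (\<Sum>i\<in>I. lam i * M * path_cost ce I P (f M) (ps i))"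
    using eq_per_od(3)[OF W _ _ _ feas_f[OF M]] Pfin ps by (intro sum_mono) (auto simp: mm_def)
  finally show ?thesis .
qed

end



context game begin

definition "arr = real_of_ereal (tight_alpha I P \<alpha>)"
definition "Bs = {e\<in>E. \<alpha> e \<noteq> \<infinity>}"
definition "As = {e\<in>E. \<alpha> e = \<infinity>}"
definition "ae e = real_of_ereal (\<alpha> e)"

lemma arr: "arr > 0" "\<forall>i\<in>I. \<exists>p\<in>P i. \<forall>e\<in>set p. \<alpha> e \<le> ereal arr"
    "\<exists>i0\<in>I. \<forall>p\<in>P i0. \<exists>e\<in>set p. ereal arr \<le> \<alpha> e"
proof -
  obtain ar where ar: "tight_alpha I P \<alpha> = ereal ar" "ar > 0"
    "\<forall>i\<in>I. \<exists>p\<in>P i. \<forall>e\<in>set p. \<alpha> e \<le> ereal ar"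
    "\<exists>i0\<in>I. \<forall>p\<in>P i0. \<exists>e\<in>set p. ereal ar \<le> \<alpha> e" by (rule tight_struct)
  have "arr = ar" using ar(1) by (simp add: arr_def)
  with ar show "arr > 0" "\<forall>i\<in>I. \<exists>p\<in>P i. \<forall>e\<in>set p. \<alpha> e \<le> ereal arr"
    "\<exists>i0\<in>I. \<forall>p\<in>P i0. \<exists>e\<in>set p. ereal arr \<le> \<alpha> e" by auto
qed

definition "ps i = (SOME p. p \<in> P i \<and> (\<forall>e\<in>set p. \<alpha> e \<le> ereal arr))"

lemma ps: assumes "i \<in> I" shows "ps i \<in> P i" "\<forall>e\<in>set (ps i). \<alpha> e \<le> ereal arr"
proof -
  from arr(2) assms obtain p where "p \<in> P i \<and> (\<forall>e\<in>set p. \<alpha> e \<le> ereal arr)" by blast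
  hence "ps i \<in> P i \<and> (\<forall>e\<in>set (ps i). \<alpha> e \<le> ereal arr)" unfolding ps_def by (rule someI)
  thus "ps i \<in> P i" "\<forall>e\<in>set (ps i). \<alpha> e \<le> ereal arr" by auto
qed

lemma Bs_fin: assumes "e \<in> Bs" shows "\<alpha> e = ereal (ae e)" "0 \<le> ae e" "e \<in> E"
proof -
  have eE: "e \<in> E" and ne: "\<alpha> e \<noteq> \<infinity>" using assms by (auto simp: Bs_def)
  from alpha_cases[OF eE] ne obtain a where "0 \<le> a" "\<alpha> e = ereal a" by auto
  thus "\<alpha> e = ereal (ae e)" "0 \<le> ae e" "e \<in> E" using eE by (auto simp: ae_def)
qed

lemma ps_B: assumes "i \<in> I" shows "set (ps i) \<subseteq> Bs"
proof
  fix e assume e: "e \<in> set (ps i)"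
  have "e \<in> E" using Pin ps(1)[OF assms] e assms by blast
  moreover have "\<alpha> e \<noteq> \<infinity>" using ps(2)[OF assms] e by auto
  ultimately show "e \<in> Bs" by (simp add: Bs_def)
qed

lemma E_split: "E = Bs \<union> As" "Bs \<inter> As = {}" by (auto simp: Bs_def As_def)

lemma finBs: "finite Bs" and finAs: "finite As" using finE by (auto simp: Bs_def As_def)

lemma ev_lower: obtains \<delta>L where "\<delta>L > 0"
  "eventually (\<lambda>M. \<forall>g. feasible I P (mm M) g \<longrightarrow> \<delta>L * M * c M \<le> Lc g) F"
proof -
  from arr(3) obtain i0 where i0: "i0 \<in> I" "\<forall>p\<in>P i0. \<exists>e\<in>set p. ereal arr \<le> \<alpha> e" by blast
  have cP: "card (P i0) > 0" using Pfin i0 by (simp add: card_gt_0_iff)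
  define \<theta>0 where "\<theta>0 = lam i0 / card (P i0)"
  have th0: "\<theta>0 > 0" using lampos i0 cP by (simp add: \<theta>0_def)
  define \<beta> where "\<beta> = arr/2 * (R \<theta>0 / 2)"
  have \<beta>: "\<beta> > 0" using arr(1) R_pos[OF th0] by (simp add: \<beta>_def)
  define Es where "Es = {e\<in>E. ereal arr \<le> \<alpha> e}"
  have "\<forall>e\<in>Es. eventually (\<lambda>M. \<beta> * c M \<le> ce e (M*\<theta>0)) F"
  proof
    fix e assume e: "e \<in> Es"
    have "ereal (arr/2) < ereal arr" using arr(1) by simp
    also have "ereal arr \<le> \<alpha> e" using e by (simp add: Es_def)
    finally have "ereal (arr/2) < \<alpha> e" .
    from ev_big[OF _ this _ th0] e arr(1) show "eventually (\<lambda>M. \<beta> * c M \<le> ce e (M*\<theta>0)) F"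
      by (simp add: \<beta>_def Es_def)
  qed
  then have "eventually (\<lambda>M. \<forall>e\<in>Es. \<beta> * c M \<le> ce e (M*\<theta>0)) F"
    by (intro eventually_ball_finite) (use finE in \<open>auto simp: Es_def\<close>)
  then have ev: "eventually (\<lambda>M. 0 < M \<and> (\<forall>e\<in>Es. \<beta> * c M \<le> ce e (M*\<theta>0))) F"
    by (rule eventually_conj[OF evpos])
  show ?thesis
  proof (rule that[of "\<theta>0 * \<beta>"])
    show "\<theta>0 * \<beta> > 0" using th0 \<beta> by simp
    show "eventually (\<lambda>M. \<forall>g. feasible I P (mm M) g \<longrightarrow> \<theta>0 * \<beta> * M * c M \<le> Lc g) F"
    proof (rule eventually_mono[OF ev], safe)
      fix M g assume M: "0 < M" and H: "\<forall>e\<in>Es. \<beta> * c M \<le> ce e (M*\<theta>0)"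
        and g: "feasible I P (mm M) g"
      have "\<exists>p\<in>P i0. \<theta>0 * M \<le> g p"
      proof (rule ccontr)
        assume "\<not> ?thesis"
        hence "\<forall>p\<in>P i0. g p < \<theta>0 * M" by auto
        hence "(\<Sum>p\<in>P i0. g p) < (\<Sum>p\<in>P i0. \<theta>0 * M)"
          using Pfin i0 by (intro sum_strict_mono) auto
        also have "\<dots> = lam i0 * M" using cP by (simp add: \<theta>0_def)
        finally show False using g i0 by (simp add: feasible_def mm_def)
      qed
      then obtain p where p: "p \<in> P i0" "\<theta>0 * M \<le> g p" by blast
      from i0(2) p(1) obtain e where e: "e \<in> set p" "ereal arr \<le> \<alpha> e" by blast
      have eE: "e \<in> E" using Pin i0 p e by auto
      have eEs: "e \<in> Es" using eE e by (simp add: Es_def)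
      have pPP: "p \<in> PP" using i0 p by auto
      have "g p \<le> load I P g e"
      proof -
        have fin: "finite {p \<in> PP. e \<in> set p}" using PPfin by (rule finite_subset[rotated]) auto
        show ?thesis unfolding load_def using pPP e g fin
          by (intro member_le_sum) (auto simp: feasible_def)
      qed
      hence ld: "\<theta>0 * M \<le> load I P g e" using p by simp
      have "\<theta>0 * \<beta> * M * c M = (\<theta>0 * M) * (\<beta> * c M)" by simp
      also have "\<dots> \<le> load I P g e * ce e (load I P g e)"
      proof (rule mult_mono)
        show "\<beta> * c M \<le> ce e (load I P g e)"
          using H eEs ce_mono[OF eE, of "M*\<theta>0" "load I P g e"] ld th0 M
          by (smt (verit) mult.commute mult_pos_pos)
        show "0 \<le> load I P g e" using load_nonneg[OF g] .
        show "0 \<le> \<beta> * c M" using \<beta> cpos'[OF M] by simp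
      qed (use ld in auto)
      also have "\<dots> \<le> Lc g" by (rule term_le_Lc[OF g eE])
      finally show "\<theta>0 * \<beta> * M * c M \<le> Lc g" .
    qed
  qed
qed

definition "K0 = (\<Sum>e\<in>Bs. ae e + 1)"

lemma K0_nn: "0 \<le> K0" unfolding K0_def using Bs_fin by (intro sum_nonneg) (auto intro: add_nonneg_nonneg)

lemma ev_Eq_upper: "eventually (\<lambda>M. Lc (f M) \<le> K0 * M * c M) F"
proof -
  have "\<forall>e\<in>Bs. eventually (\<lambda>M. ce e M \<le> (ae e + 1) * c M) F"
    using ev_upper Bs_fin by blast
  then have "eventually (\<lambda>M. \<forall>e\<in>Bs. ce e M \<le> (ae e + 1) * c M) F"
    by (rule eventually_ball_finite[OF finBs])
  then have ev: "eventually (\<lambda>M. 0 < M \<and> (\<forall>e\<in>Bs. ce e M \<le> (ae e + 1) * c M)) F"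
    by (rule eventually_conj[OF evpos])
  show ?thesis
  proof (rule eventually_mono[OF ev], safe)
    fix M assume M: "0 < M" and H: "\<forall>e\<in>Bs. ce e M \<le> (ae e + 1) * c M"
    have pc: "path_cost ce I P (f M) (ps i) \<le> K0 * c M" if i: "i \<in> I" for i
    proof -
      have "path_cost ce I P (f M) (ps i) = (\<Sum>e\<in>set (ps i). ce e (xl M e))"
        by (simp add: path_cost_def xl_def)
      also have "\<dots> \<le> (\<Sum>e\<in>set (ps i). ce e M)"
        using ps_B[OF i] Bs_fin load_nonneg[OF feas_f[OF M]] load_leM[OF feas_f[OF M]]
        by (intro sum_mono ce_mono) (auto simp: xl_def)
      also have "\<dots> \<le> (\<Sum>e\<in>Bs. ce e M)"
        using ps_B[OF i] finBs Bs_fin M by (intro sum_mono2 ce_nn) auto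
      also have "\<dots> \<le> (\<Sum>e\<in>Bs. (ae e + 1) * c M)" using H by (intro sum_mono) auto
      also have "\<dots> = K0 * c M" by (simp add: K0_def sum_distrib_right)
      finally show ?thesis .
    qed
    have "Lc (f M) \<le> (\<Sum>i\<in>I. lam i * M * path_cost ce I P (f M) (ps i))"
      using Eq_le_choice[OF M] ps by blast
    also have "\<dots> \<le> (\<Sum>i\<in>I. lam i * M * (K0 * c M))"
      using pc lampos M by (intro sum_mono mult_left_mono) auto
    also have "\<dots> = (\<Sum>i\<in>I. lam i) * (M * (K0 * c M))" by (simp add: sum_distrib_right mult.assoc)
    also have "\<dots> = K0 * M * c M" using lamsum by simp
    finally show "Lc (f M) \<le> K0 * M * c M" .
  qed
qed

end



context game begin

lemma theta_exists:
  assumes "0 < \<eta>0" "0 < d" "0 \<le> amax"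
  obtains \<theta> where "\<theta> > 0" "\<theta>*(amax+1) + amax*((1+\<theta>/\<eta>0) powr rho - 1) \<le> d"
proof -
  have "((\<lambda>\<theta>::real. \<theta>*(amax+1) + amax*((1+\<theta>/\<eta>0) powr rho - 1)) \<longlongrightarrow> 0) (at_right 0)"
    using assms by (intro tendsto_eq_intros) auto
  from order_tendstoD(2)[OF this assms(2)] obtain b where b: "b > 0"
    "\<forall>y>0. y < b \<longrightarrow> y*(amax+1) + amax*((1+y/\<eta>0) powr rho - 1) < d"
    by (auto simp: eventually_at_right_field)
  have h: "b/2 > 0" "b/2 < b" using b(1) by auto
  have X: "(b/2)*(amax+1) + amax*((1+(b/2)/\<eta>0) powr rho - 1) < d" using b(2) h by blast
  show ?thesis by (rule that[of "b/2"]) (fact h(1), rule less_imp_le[OF X])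
qed

lemma Lc_sum: "Lc g = (\<Sum>e\<in>E. load I P g e * ce e (load I P g e))"
  by (simp add: Lc_def social_cost_def)

theorem main: "((\<lambda>M. poa E ce I P (mm M) (f M)) \<longlongrightarrow> 1) F"
proof -
  obtain \<delta>L where \<delta>L: "\<delta>L > 0"
    "eventually (\<lambda>M. \<forall>g. feasible I P (mm M) g \<longrightarrow> \<delta>L * M * c M \<le> Lc g) F"
    by (rule ev_lower)
  show ?thesis
  proof (rule tendstoI)
    fix \<epsilon> :: real assume \<epsilon>: "0 < \<epsilon>"
    define T where "T = 1 + real (card E) + real (card E) * (rho+1)"
    have T: "T > 0" using rho_nonneg by (simp add: T_def add_pos_nonneg)
    define \<eta> where "\<eta> = min 1 (\<epsilon> * \<delta>L / (2*T))"
    have \<eta>: "0 < \<eta>" "\<eta> \<le> 1" "T * \<eta> \<le> \<epsilon> * \<delta>L / 2"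
      using \<epsilon> \<delta>L(1) T by (auto simp: \<eta>_def field_simps min_def)
    define amax where "amax = (\<Sum>e\<in>Bs. ae e)"
    have amax: "0 \<le> amax" using Bs_fin by (simp add: amax_def sum_nonneg)
    have ae_le: "ae e \<le> amax" if "e \<in> Bs" for e
      unfolding amax_def using that finBs Bs_fin by (intro member_le_sum) auto
    define \<eta>0 where "\<eta>0 = \<eta> / (2*(amax+1))"
    have \<eta>0: "0 < \<eta>0" "\<eta>0 \<le> 1" "\<eta>0 * (amax+1) = \<eta>/2"
      using \<eta> amax by (auto simp: \<eta>0_def field_simps)
    define \<delta> where "\<delta> = \<eta>/6"
    have \<delta>: "0 < \<delta>" using \<eta> by (simp add: \<delta>_def)
    obtain \<theta> where \<theta>: "\<theta> > 0" "\<theta>*(amax+1) + amax*((1+\<theta>/\<eta>0) powr rho - 1) \<le> \<eta>/6"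
      using theta_exists[OF \<eta>0(1) _ amax, of "\<eta>/6"] \<eta> by auto
    define Cmax where "Cmax = (\<Sum>i\<in>I. real (card (P i)))"
    define Cn where "Cn = real (card I) * Cmax + 1"
    have Cmax: "0 \<le> Cmax" by (simp add: Cmax_def sum_nonneg)
    have Cn: "Cn \<ge> 1" using Cmax by (simp add: Cn_def)
    define \<theta>r where "\<theta>r = \<theta> / Cn"
    have \<theta>r: "\<theta>r > 0" "\<theta>r * Cn = \<theta>" using \<theta> Cn by (auto simp: \<theta>r_def)
    define K1 where "K1 = K0 + 1"
    define bb where "bb = K1 / (\<theta>r * (R \<theta>r / 2))"
    have Rr: "R \<theta>r > 0" by (rule R_pos[OF \<theta>r(1)])
    have bb: "0 \<le> bb" "bb * (R \<theta>r / 2) = K1 / \<theta>r"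
      using K0_nn Rr \<theta>r by (auto simp: bb_def K1_def field_simps)
    have E2: "eventually (\<lambda>M. \<forall>e\<in>Bs. ce e M \<le> (ae e + 1) * c M) F"
      by (rule eventually_ball_finite[OF finBs]) (use ev_upper Bs_fin in blast)
    have E3: "eventually (\<lambda>M. \<forall>e\<in>Bs. \<forall>z. \<eta>0*M \<le> z \<and> z \<le> M \<longrightarrow>
        \<bar>ce e z - ae e*(z/M) powr rho * c M\<bar> \<le> \<delta> * c M) F"
      by (rule eventually_ball_finite[OF finBs]) (use ev_G[OF _ _ \<delta> \<eta>0(1,2)] Bs_fin in blast)
    have E4: "eventually (\<lambda>M. \<forall>e\<in>As. bb * (R \<theta>r / 2) * c M \<le> ce e (M*\<theta>r)) F"
    proof (rule eventually_ball_finite[OF finAs], rule ballI)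
      fix e assume e: "e \<in> As"
      then have "e \<in> E" "\<alpha> e = \<infinity>" by (auto simp: As_def)
      then show "eventually (\<lambda>M. bb * (R \<theta>r / 2) * c M \<le> ce e (M*\<theta>r)) F"
        using ev_big[of e bb \<theta>r] bb(1) \<theta>r(1) by simp
    qed
    have ev: "eventually (\<lambda>M. 0 < M \<and> (\<forall>e\<in>Bs. ce e M \<le> (ae e + 1) * c M) \<and>
        (\<forall>e\<in>Bs. \<forall>z. \<eta>0*M \<le> z \<and> z \<le> M \<longrightarrow> \<bar>ce e z - ae e*(z/M) powr rho * c M\<bar> \<le> \<delta> * c M) \<and>
        (\<forall>e\<in>As. bb * (R \<theta>r / 2) * c M \<le> ce e (M*\<theta>r)) \<and>
        (\<forall>g. feasible I P (mm M) g \<longrightarrow> \<delta>L * M * c M \<le> Lc g) \<and>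
        Lc (f M) \<le> K0 * M * c M) F"
      by (intro eventually_conj evpos E2 E3 E4 \<delta>L(2) ev_Eq_upper)
    show "eventually (\<lambda>M. dist (poa E ce I P (mm M) (f M)) 1 < \<epsilon>) F"
    proof (rule eventually_mono[OF ev], elim conjE)
      fix M assume M: "0 < M" and H2: "\<forall>e\<in>Bs. ce e M \<le> (ae e + 1) * c M"
        and H3: "\<forall>e\<in>Bs. \<forall>z. \<eta>0*M \<le> z \<and> z \<le> M \<longrightarrow> \<bar>ce e z - ae e*(z/M) powr rho * c M\<bar> \<le> \<delta> * c M"
        and H4: "\<forall>e\<in>As. bb * (R \<theta>r / 2) * c M \<le> ce e (M*\<theta>r)"
        and H5: "\<forall>g. feasible I P (mm M) g \<longrightarrow> \<delta>L * M * c M \<le> Lc g"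
        and H6: "Lc (f M) \<le> K0 * M * c M"
      define C where "C = c M"
      have C: "C > 0" using cpos'[OF M] by (simp add: C_def)
      have MC: "M * C > 0" using M C by simp
      have OptL: "\<delta>L * M * C \<le> Opt M" unfolding C_def using H5 by (intro Opt_ge[OF M]) auto
      have OptP: "Opt M > 0" using OptL \<delta>L(1) MC by (smt (verit) mult_pos_pos mult.assoc)
      have EqO: "Opt M \<le> Lc (f M)" by (rule Opt_le[OF M feas_f[OF M]])
      have poa_eq: "poa E ce I P (mm M) (f M) = Lc (f M) / Opt M"
        using OptP by (simp add: poa_def Opt_def Lc_def)
      have main_ineq: "Lc (f M) \<le> Opt M + T * \<eta> * (M * C)"
      proof -
        have Wnn: "0 \<le> (1+\<theta>/\<eta>0) powr rho - 1"
        proof -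
          have "1 \<le> 1+\<theta>/\<eta>0" using \<theta>(1) \<eta>0(1) by simp
          hence "1 \<le> (1+\<theta>/\<eta>0) powr rho" using rho_nonneg by (rule ge_one_powr_ge_zero)
          thus ?thesis by simp
        qed
        obtain y0 where y0: "feasible I P (mm M) y0" "Lc y0 < Opt M + \<eta> * (M * C)"
          using Opt_approx[OF M, of "\<eta> * (M * C)"] \<eta>(1) MC by auto
        have y0nn: "0 \<le> y0 p" if "p \<in> PP" for p using y0(1) that by (auto simp: feasible_def)
        have Asmall: "load I P y0 e < \<theta>r * M" if e: "e \<in> As" for e
        proof (rule ccontr)
          assume "\<not> ?thesis"
          hence ge: "\<theta>r * M \<le> load I P y0 e" by simp
          have eE: "e \<in> E" using e by (simp add: As_def)
          have "K1 * (M * C) = (\<theta>r * M) * (bb * (R \<theta>r / 2) * C)"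
            using bb(2) \<theta>r(1) by (simp add: field_simps)
          also have "\<dots> \<le> load I P y0 e * ce e (load I P y0 e)"
          proof (rule mult_mono)
            have "bb * (R \<theta>r / 2) * C \<le> ce e (M*\<theta>r)" using H4 e by (simp add: C_def)
            also have "\<dots> \<le> ce e (load I P y0 e)"
              using ge M \<theta>r(1) by (intro ce_mono[OF eE]) (auto simp: mult.commute)
            finally show "bb * (R \<theta>r / 2) * C \<le> ce e (load I P y0 e)" .
            show "0 \<le> load I P y0 e" by (rule load_nonneg[OF y0(1)])
            show "0 \<le> bb * (R \<theta>r / 2) * C" using bb(1) Rr C by simp
          qed (use ge in auto)
          also have "\<dots> \<le> Lc y0" by (rule term_le_Lc[OF y0(1) eE])
          also have "\<dots> < Opt M + \<eta> * (M * C)" by (rule y0(2))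
          also have "\<dots> \<le> K0 * (M * C) + 1 * (M * C)"
            using EqO H6 \<eta>(2) MC by (intro add_mono mult_right_mono) (auto simp: C_def mult.assoc)
          finally show False by (simp add: K1_def algebra_simps)
        qed
        define bad where "bad = (\<lambda>p. \<exists>e\<in>set p. \<alpha> e = \<infinity>)"
        have ps_good: "\<not> bad (ps i)" if "i \<in> I" for i
          using ps_B[OF that] by (auto simp: bad_def Bs_def)
        have bad_small: "y0 q \<le> \<theta>r * M" if q: "q \<in> PP" "bad q" for q
        proof -
          from q obtain e where e: "e \<in> set q" "\<alpha> e = \<infinity>" by (auto simp: bad_def)
          have eAs: "e \<in> As" using e PPsub q by (auto simp: As_def)
          have fin: "finite {p \<in> PP. e \<in> set p}" using PPfin by (rule finite_subset[rotated]) auto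
          have "y0 q \<le> load I P y0 e" unfolding load_def using q e fin y0nn
            by (intro member_le_sum) auto
          thus ?thesis using Asmall[OF eAs] by simp
        qed
        define X where "X = (\<lambda>i. \<Sum>q\<in>{q\<in>P i. bad q}. y0 q)"
        have Xnn: "0 \<le> X i" if "i \<in> I" for i
          unfolding X_def using y0nn that by (intro sum_nonneg) auto
        have Xle: "X i \<le> real (card (P i)) * (\<theta>r * M)" if i: "i \<in> I" for i
        proof -
          have "X i \<le> (\<Sum>q\<in>{q\<in>P i. bad q}. \<theta>r * M)"
            unfolding X_def using bad_small i by (intro sum_mono) auto
          also have "\<dots> = real (card {q\<in>P i. bad q}) * (\<theta>r * M)" by simp
          also have "\<dots> \<le> real (card (P i)) * (\<theta>r * M)"
            using i Pfin \<theta>r(1) M by (intro mult_right_mono) (auto intro: card_mono)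
          finally show ?thesis .
        qed
        have Xsum: "(\<Sum>i\<in>I. X i) \<le> \<theta> * M"
        proof -
          have "(\<Sum>i\<in>I. X i) \<le> (\<Sum>i\<in>I. Cmax * (\<theta>r * M))"
          proof (rule sum_mono)
            fix i assume i: "i \<in> I"
            have "real (card (P i)) \<le> Cmax" unfolding Cmax_def using i finI by (intro member_le_sum) auto
            hence "real (card (P i)) * (\<theta>r * M) \<le> Cmax * (\<theta>r * M)"
              using \<theta>r(1) M by (intro mult_right_mono) auto
            thus "X i \<le> Cmax * (\<theta>r * M)" using Xle[OF i] by linarith
          qed
          also have "\<dots> = real (card I) * Cmax * (\<theta>r * M)" by simp
          also have "\<dots> \<le> Cn * (\<theta>r * M)" using \<theta>r(1) M by (intro mult_right_mono) (auto simp: Cn_def)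
          also have "\<dots> = (\<theta>r * Cn) * M" by simp
          also have "\<dots> = \<theta> * M" using \<theta>r(2) by simp
          finally show ?thesis .
        qed
        define ex where "ex = (\<lambda>p. \<Sum>i\<in>I. if p = ps i then X i else 0)"
        define y where "y = (\<lambda>p. (if bad p then 0 else y0 p) + ex p)"
        have exnn: "0 \<le> ex p" for p unfolding ex_def using Xnn by (intro sum_nonneg) auto
        have ex_in: "ex p = (if p = ps j then X j else 0)" if j: "j \<in> I" "p \<in> P j" for p j
        proof -
          have "ex p = (\<Sum>i\<in>I. if i = j then (if p = ps i then X i else 0) else 0)"
            unfolding ex_def
          proof (rule sum.cong[OF refl])
            fix i assume i: "i \<in> I"
            show "(if p = ps i then X i else 0) = (if i = j then (if p = ps i then X i else 0) else 0)"
            proof (cases "i = j")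
              case False
              have "ps i \<in> P i" using ps(1)[OF i] .
              hence "p \<noteq> ps i" using disj i j False unfolding disjoint_family_on_def by blast
              then show ?thesis using False by simp
            qed simp
          qed
          also have "\<dots> = (if p = ps j then X j else 0)" using j finI by simp
          finally show ?thesis .
        qed
        have ex_PP: "(\<Sum>p\<in>PP. ex p) = (\<Sum>i\<in>I. X i)"
        proof -
          have "(\<Sum>p\<in>PP. ex p) = (\<Sum>i\<in>I. \<Sum>p\<in>PP. if p = ps i then X i else 0)"
            unfolding ex_def by (rule sum.swap)
          also have "\<dots> = (\<Sum>i\<in>I. X i)"
          proof (rule sum.cong[OF refl])
            fix i assume i: "i \<in> I"
            have "ps i \<in> PP" using ps(1)[OF i] i by auto
            thus "(\<Sum>p\<in>PP. if p = ps i then X i else 0) = X i"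
              using PPfin by (simp add: sum.delta')
          qed
          finally show ?thesis .
        qed
        have yfeas: "feasible I P (mm M) y"
          unfolding feasible_def
        proof (intro conjI ballI)
          fix p assume "p \<in> PP"
          then show "0 \<le> y p" unfolding y_def using y0nn exnn by auto
        next
          fix j assume j: "j \<in> I"
          have fin: "finite (P j)" using Pfin j by auto
          have "sum y (P j) = (\<Sum>p\<in>P j. if bad p then 0 else y0 p) + (\<Sum>p\<in>P j. ex p)"
            unfolding y_def by (simp add: sum.distrib)
          also have "(\<Sum>p\<in>P j. ex p) = (\<Sum>p\<in>P j. if p = ps j then X j else 0)"
            using ex_in j by (intro sum.cong) auto
          also have "\<dots> = X j" using fin ps(1)[OF j] by (simp add: sum.delta')
          also have "X j = (\<Sum>p\<in>P j. if bad p then y0 p else 0)"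
            unfolding X_def using fin by (simp add: sum.inter_filter)
          also have "(\<Sum>p\<in>P j. if bad p then 0 else y0 p) + (\<Sum>p\<in>P j. if bad p then y0 p else 0)
              = (\<Sum>p\<in>P j. y0 p)"
            by (simp add: sum.distrib[symmetric] if_distrib cong: if_cong)
          also have "\<dots> = mm M j" using y0(1) j by (simp add: feasible_def)
          finally show "sum y (P j) = mm M j" .
        qed
        have loadA: "load I P y e = 0" if e: "e \<in> As" for e
          unfolding load_def
        proof (rule sum.neutral, rule ballI)
          fix p assume p: "p \<in> {p \<in> PP. e \<in> set p}"
          then have bp: "bad p" using e by (auto simp: bad_def As_def)
          obtain j where j: "j \<in> I" "p \<in> P j" using p by auto
          have "p \<noteq> ps j" using ps_good[OF j(1)] bp by auto
          then show "y p = 0" using bp ex_in[OF j] by (simp add: y_def)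
        qed
        have loadB: "load I P y e \<le> load I P y0 e + \<theta> * M" for e
        proof -
          have "load I P y e = (\<Sum>p\<in>PP. if e \<in> set p then y p else 0)" by (rule load_alt[OF PPfin])
          also have "\<dots> \<le> (\<Sum>p\<in>PP. (if e \<in> set p then y0 p else 0) + ex p)"
            using y0nn exnn by (intro sum_mono) (auto simp: y_def)
          also have "\<dots> = load I P y0 e + (\<Sum>p\<in>PP. ex p)"
            by (simp add: sum.distrib load_alt[OF PPfin])
          also have "\<dots> \<le> load I P y0 e + \<theta> * M" using ex_PP Xsum by simp
          finally show ?thesis .
        qed
        have Lcy: "Lc y \<le> Lc y0 + real (card E) * (\<eta> * (M * C))"
        proof -
          have "Lc y \<le> (\<Sum>e\<in>E. load I P y0 e * ce e (load I P y0 e) + \<eta> * (M * C))"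
            unfolding Lc_sum
          proof (rule sum_mono)
            fix e assume eE: "e \<in> E"
            show "load I P y e * ce e (load I P y e) \<le> load I P y0 e * ce e (load I P y0 e) + \<eta> * (M * C)"
            proof (cases "e \<in> As")
              case True
              have "0 \<le> load I P y0 e * ce e (load I P y0 e)"
                using load_nonneg[OF y0(1)] ce_nn[OF eE] by simp
              then show ?thesis using loadA[OF True] MC \<eta>(1) by simp
            next
              case False
              then have eB: "e \<in> Bs" using eE E_split by auto
              let ?a = "ae e"
              have "load I P y e * ce e (load I P y e) \<le> load I P y0 e * ce e (load I P y0 e)
                 + (\<theta>*(?a+1) + \<eta>0*(?a+1) + ?a*((1+\<theta>/\<eta>0) powr rho - 1) + 2*\<delta>)*M*C"
              proof (rule cont_region[where h="ce e"])
                show "mono_on {0..} (ce e)" using costs eE by auto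
                show "\<forall>x\<ge>0. 0 \<le> ce e x" using costs eE by auto
                show "\<forall>z. \<eta>0*M \<le> z \<and> z \<le> M \<longrightarrow> \<bar>ce e z - ?a*(z/M) powr rho * C\<bar> \<le> \<delta>*C"
                  using H3 eB by (simp add: C_def)
                show "ce e M \<le> (?a+1)*C" using H2 eB by (simp add: C_def)
              qed (use M C Bs_fin[OF eB] rho_nonneg \<eta>0 \<delta> \<theta>(1) load_nonneg[OF y0(1)] load_leM[OF y0(1)]
                  load_nonneg[OF yfeas] load_leM[OF yfeas] loadB in auto)
              also have "(\<theta>*(?a+1) + \<eta>0*(?a+1) + ?a*((1+\<theta>/\<eta>0) powr rho - 1) + 2*\<delta>) \<le> \<eta>"
              proof -
                have a: "?a \<le> amax" "0 \<le> ?a" using ae_le[OF eB] Bs_fin[OF eB] by auto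
                have "\<theta>*(?a+1) \<le> \<theta>*(amax+1)" using a \<theta>(1) by simp
                moreover have "?a*((1+\<theta>/\<eta>0) powr rho - 1) \<le> amax*((1+\<theta>/\<eta>0) powr rho - 1)"
                  using a Wnn by (intro mult_right_mono) auto
                moreover have "\<eta>0*(?a+1) \<le> \<eta>0*(amax+1)" using a \<eta>0(1) by simp
                ultimately show ?thesis using \<theta>(2) \<eta>0(3) by (simp add: \<delta>_def)
              qed
              hence "(\<theta>*(?a+1) + \<eta>0*(?a+1) + ?a*((1+\<theta>/\<eta>0) powr rho - 1) + 2*\<delta>)*M*C \<le> \<eta>*M*C"
                using MC M C by (intro mult_right_mono) auto
              finally show ?thesis by (simp add: mult.assoc)
            qed
          qed
          also have "\<dots> = Lc y0 + real (card E) * (\<eta> * (M * C))" by (simp add: sum.distrib Lc_sum)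
          finally show ?thesis .
        qed
        define lw where "lw = 1/(rho+1)"
        define mw where "mw = rho/(rho+1)"
        have VIb: "Lc (f M) \<le> lw * Lc y + mw * Lc (f M) + real (card E) * (\<eta> * (M * C))"
        proof -
          have "Lc (f M) \<le> (\<Sum>e\<in>E. load I P y e * ce e (xl M e))" by (rule VI[OF M yfeas])
          also have "\<dots> \<le> (\<Sum>e\<in>E. lw * (load I P y e * ce e (load I P y e)) + mw * (xl M e * ce e (xl M e)) + \<eta> * (M * C))"
          proof (rule sum_mono)
            fix e assume eE: "e \<in> E"
            have xnn: "0 \<le> xl M e" "xl M e \<le> M" using load_nonneg[OF feas_f[OF M]] load_leM[OF feas_f[OF M]]
              by (auto simp: xl_def)
            have rhs_nn: "0 \<le> lw * (load I P y e * ce e (load I P y e)) + mw * (xl M e * ce e (xl M e))"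
              using load_nonneg[OF yfeas] ce_nn[OF eE] xnn rho_nonneg by (auto simp: lw_def mw_def)
            show "load I P y e * ce e (xl M e) \<le> lw * (load I P y e * ce e (load I P y e)) + mw * (xl M e * ce e (xl M e)) + \<eta> * (M * C)"
            proof (cases "e \<in> As")
              case True
              then show ?thesis using loadA[OF True] rhs_nn MC \<eta>(1) by simp
            next
              case False
              then have eB: "e \<in> Bs" using eE E_split by auto
              let ?a = "ae e"
              have "load I P y e * ce e (xl M e) \<le> (1/(rho+1))*(load I P y e * ce e (load I P y e))
                 + (rho/(rho+1))*(xl M e * ce e (xl M e)) + (\<eta>0*(?a+1) + 3*\<delta>)*M*C"
              proof (rule smooth_region[where h="ce e"])
                show "mono_on {0..} (ce e)" using costs eE by auto
                show "\<forall>x\<ge>0. 0 \<le> ce e x" using costs eE by auto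
                show "\<forall>z. \<eta>0*M \<le> z \<and> z \<le> M \<longrightarrow> \<bar>ce e z - ?a*(z/M) powr rho * C\<bar> \<le> \<delta>*C"
                  using H3 eB by (simp add: C_def)
                show "ce e M \<le> (?a+1)*C" using H2 eB by (simp add: C_def)
              qed (use M C Bs_fin[OF eB] rho_nonneg \<eta>0 \<delta> xnn
                  load_nonneg[OF yfeas] load_leM[OF yfeas] in auto)
              also have "(\<eta>0*(?a+1) + 3*\<delta>)*M*C \<le> \<eta> * (M * C)"
              proof -
                have "\<eta>0*(?a+1) \<le> \<eta>0*(amax+1)" using ae_le[OF eB] \<eta>0(1) by simp
                hence "\<eta>0*(?a+1) + 3*\<delta> \<le> \<eta>" using \<eta>0(3) by (simp add: \<delta>_def)
                thus ?thesis using MC by (simp add: mult.assoc mult_right_mono)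
              qed
              finally show ?thesis by (simp add: lw_def mw_def)
            qed
          qed
          also have "\<dots> = lw * Lc y + mw * Lc (f M) + real (card E) * (\<eta> * (M * C))"
            by (simp add: sum.distrib sum_distrib_left[symmetric] Lc_sum xl_def)
          finally show ?thesis .
        qed
        have "(rho+1) * Lc (f M) \<le> Lc y + rho * Lc (f M) + (rho+1) * (real (card E) * (\<eta> * (M * C)))"
        proof -
          have "(rho+1) * Lc (f M) \<le> (rho+1) * (lw * Lc y + mw * Lc (f M) + real (card E) * (\<eta> * (M * C)))"
            using VIb rho_nonneg by (intro mult_left_mono) auto
          also have "\<dots> = Lc y + rho * Lc (f M) + (rho+1) * (real (card E) * (\<eta> * (M * C)))"
          proof -
            have l1: "(rho+1)*lw = 1" "(rho+1)*mw = rho" using rho_nonneg by (auto simp: lw_def mw_def)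
            have "(rho+1) * (lw * Lc y + mw * Lc (f M) + real (card E) * (\<eta> * (M * C)))
               = ((rho+1)*lw) * Lc y + ((rho+1)*mw) * Lc (f M) + (rho+1) * (real (card E) * (\<eta> * (M * C)))"
              by (simp add: algebra_simps)
            then show ?thesis unfolding l1 by simp
          qed
          finally show ?thesis .
        qed
        hence "Lc (f M) \<le> Lc y + (rho+1) * (real (card E) * (\<eta> * (M * C)))"
          by (simp add: algebra_simps)
        also have "\<dots> \<le> Lc y0 + real (card E) * (\<eta> * (M * C)) + (rho+1) * (real (card E) * (\<eta> * (M * C)))"
          using Lcy by simp
        also have "\<dots> \<le> Opt M + \<eta> * (M * C) + real (card E) * (\<eta> * (M * C)) + (rho+1) * (real (card E) * (\<eta> * (M * C)))"
          using y0(2) by simp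
        also have "\<dots> = Opt M + T * \<eta> * (M * C)" by (simp add: T_def algebra_simps)
        finally show ?thesis .
      qed
      have "T * \<eta> * (M * C) \<le> (\<epsilon> * \<delta>L / 2) * (M * C)"
        using \<eta>(3) MC by (intro mult_right_mono) auto
      also have "\<dots> = (\<epsilon>/2) * (\<delta>L * M * C)" by simp
      also have "\<dots> \<le> (\<epsilon>/2) * Opt M" using OptL \<epsilon> by (intro mult_left_mono) auto
      finally have "Lc (f M) \<le> Opt M * (1 + \<epsilon>/2)" using main_ineq by (simp add: algebra_simps)
      hence "Lc (f M) / Opt M \<le> 1 + \<epsilon>/2" using OptP by (simp add: divide_le_eq mult.commute)
      moreover have "1 \<le> Lc (f M) / Opt M" using EqO OptP by simp
      ultimately show "dist (poa E ce I P (mm M) (f M)) 1 < \<epsilon>"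
        unfolding poa_eq dist_real_def using \<epsilon> by simp
    qed
  qed
qed

end


lemma sc_top: "(u::real) > 0 \<Longrightarrow> filterlim (\<lambda>M. M*u) at_top at_top"
  by (intro filterlim_at_top_mult_tendsto_pos[OF tendsto_const] filterlim_ident)
lemma sc_right: assumes "(u::real) > 0" shows "filterlim (\<lambda>M. M*u) (at_right 0) (at_right 0)"
proof -
  have "((\<lambda>M. M*u) \<longlongrightarrow> 0) (at_right (0::real))"
    by (intro tendsto_mult_left_zero tendsto_ident_at)
  moreover have "eventually (\<lambda>M::real. M*u \<in> {0<..} \<and> M*u \<noteq> 0) (at_right 0)"
    using assms by (auto simp: eventually_at_right_field intro!: exI[of _ 1])
  ultimately show ?thesis by (simp add: filterlim_at)
qed
lemma "eventually (\<lambda>M::real. 0 < M) (at_right 0)" by (simp add: eventually_at_right_less)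

theorem theorem5p2:
  fixes V :: "'v set" and E :: "'e set" and src tgt :: "'e \<Rightarrow> 'v"
    and I :: "'i set" and orig dest :: "'i \<Rightarrow> 'v" and P :: "'i \<Rightarrow> 'e list set"
    and ce :: "'e \<Rightarrow> real \<Rightarrow> real" and lam :: "'i \<Rightarrow> real"
    and c :: "real \<Rightarrow> real" and \<alpha> :: "'e \<Rightarrow> ereal" and F :: "real filter"
    and f :: "real \<Rightarrow> 'e list \<Rightarrow> real"
  assumes graph: "finite V" "finite E" "src ` E \<subseteq> V" "tgt ` E \<subseteq> V"
    and od: "finite I" "\<forall>i\<in>I. orig i \<in> V \<and> dest i \<in> V"
    and paths: "\<forall>i\<in>I. finite (P i) \<and> P i \<noteq> {} \<and> (\<forall>p\<in>P i. is_path E src tgt (orig i) (dest i) p)"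
    and disj: "disjoint_family_on P I"
    and costs: "\<forall>e\<in>E. continuous_on {0..} (ce e) \<and> mono_on {0..} (ce e) \<and> (\<forall>x\<ge>0. 0 \<le> ce e x)"
    and lam: "\<forall>i\<in>I. 0 < lam i" "(\<Sum>i\<in>I. lam i) = 1"
    and omega: "F = at_right 0 \<or> F = at_top"
    and regvar: "regularly_varying F c"
    and bench: "\<forall>e\<in>E. ((\<lambda>x. ereal (ce e x / c x)) \<longlongrightarrow> \<alpha> e) F"
    and tight: "0 < tight_alpha I P \<alpha>" "tight_alpha I P \<alpha> < \<infinity>"
    and eq: "\<forall>M>0. wardrop_eq ce I P (\<lambda>i. lam i * M) (f M)"
  shows "((\<lambda>M. poa E ce I P (\<lambda>i. lam i * M) (f M)) \<longlongrightarrow> 1) F"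
  proof -
  have evpos: "eventually (\<lambda>M. 0 < M) F"
    using omega by (auto simp: eventually_at_right_less eventually_gt_at_top)
  have scale: "\<And>u. u > 0 \<Longrightarrow> filterlim (\<lambda>M. M*u) F F"
    using omega sc_top sc_right by auto
  have nb1: "at_right (0::real) \<noteq> bot" by simp
  have nb2: "(at_top::real filter) \<noteq> bot" by simp
  have nbot: "F \<noteq> bot" using omega nb1 nb2 by metis
  have cpos: "\<forall>t>0. c t > 0" and regv: "\<forall>x>0. \<exists>L. L \<noteq> 0 \<and> ((\<lambda>t. c (t*x) / c t) \<longlongrightarrow> L) F"
    using regvar by (auto simp: regularly_varying_def)
  interpret rv c F by (unfold_locales) (use evpos scale nbot cpos regv in auto)
  have Pfin: "\<forall>i\<in>I. finite (P i) \<and> P i \<noteq> {}" using paths by auto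
  have Pin: "\<forall>i\<in>I. \<forall>p\<in>P i. p \<noteq> [] \<and> set p \<subseteq> E" using paths by (auto simp: is_path_def)
  have costs': "\<forall>e\<in>E. mono_on {0..} (ce e) \<and> (\<forall>x\<ge>0. 0 \<le> ce e x)" using costs by auto
  interpret game c F E I P ce lam \<alpha> f
    by (unfold_locales) (use graph(2) od(1) Pfin Pin disj costs' lam bench tight eq in auto)
  show ?thesis using main by (simp add: mm_def)
qed

end
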